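(* Let $\mathcal{Q}\subseteq\mathcal{P}_Z$ be non-empty and, for each $\mathbb{Q}\in\mathcal{Q}$, let $l_{\mathbb{Q}}:\mathbb{R}\to\mathbb{R}$ satisfy: (l1) each $l_{\mathbb{Q}}$ is increasing and convex with $\lim_{x\to\pm\infty}(l_{\mathbb{Q}}(x)-x)=+\infty$; (l2) $\sup_{\mathbb{Q}\in\mathcal{Q}}\mathbb{E}^{\mathbb{Q}}l_{\mathbb{Q}}(\varphi(Z))<\infty$ for some increasing function $\varphi:[1,\infty)\to\mathbb{R}$ with $\lim_{x\to\infty}\varphi(x)/x=+\infty$; (l3) $l^*_{\mathbb{Q}}(1)=0$ for all $\mathbb{Q}\in\mathcal{Q}$, where $l^*_{\mathbb{Q}}(y)=\sup_{x\in\mathbb{R}}(xy-l_{\mathbb{Q}}(x))$. For $X\in B_Z$ let $\rho_{\mathbb{Q}}(X)=\inf_{s\in\mathbb{R}}(\mathbb{E}^{\mathbb{Q}}l_{\mathbb{Q}}(s-X)-s)$. Then for every $\mathbb{Q}\in\mathcal{Q}$, $\rho_{\mathbb{Q}}$ is a real-valued convex risk measure on $B_Z$ with $\rho_{\mathbb{Q}}(0)=0$ and $$\rho_{\mathbb{Q}}(X)=\max_{\mathbb{P}\in\mathcal{P}_Z,\,\mathbb{P}\ll\mathbb{Q}}\Big(\mathbb{E}^{\mathbb{P}}[-X]-\mathbb{E}^{\mathbb{Q}}\Big[l^*_{\mathbb{Q}}\Big(\frac{d\mathbb{P}}{d\mathbb{Q}}\Big)\Big]\Big),\quad X\in B_Z.$$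 Moreover, the set $A=\bigcap_{\mathbb{Q}\in\mathcal{Q}}\{X\in B_Z:\rho_{\mathbb{Q}}(X)\le0\}+B^+$ is of the form $A=\{X\in B_Z:\mathbb{E}^{\mathbb{P}}X+\alpha(\mathbb{P})\ge0\text{ for all }\mathbb{P}\in\mathcal{P}_Z\}+B^+$ for a mapping $\alpha:\mathcal{P}_Z\to\mathbb{R}_+\cup\{+\infty\}$ satisfying (A1) $\inf_{\mathbb{P}\in\mathcal{P}_Z}\alpha(\mathbb{P})=0$ and (A2) $\alpha(\mathbb{P})\ge\mathbb{E}^{\mathbb{P}}\beta(Z)$ for all $\mathbb{P}\in\mathcal{P}_Z$ for some increasing $\beta:[1,\infty)\to\mathbb{R}$ with $\lim_{x\to\infty}\beta(x)/x=+\infty$.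
   Context: Fix integers $J\ge0$, $T\ge1$. $\Omega$ is a non-empty subset of $((0,\infty)\times\mathbb{R}^J)^T$ with the Euclidean metric. $B$ is the space of Borel functions $X:\Omega\to\mathbb{R}$, $B^+=\{X\in B:X\ge0\}$. $Z:\Omega\to[1,\infty)$ is continuous with $\{Z\le z\}$ compact for all $z\in\mathbb{R}_+$. $B_Z=\{X\in B:X/Z\text{ bounded}\}$, and $\mathcal{P}_Z$ is the set of Borel probability measures $\mathbb{P}$ on $\Omega$ with $\mathbb{E}^{\mathbb{P}}Z<\infty$. "Increasing" means $f(x)\ge f(y)$ for $x\ge y$. A convex risk measure on $B_Z$ is a map $\rho:B_Z\to\mathbb{R}$ that is decreasing ($\rho(X)\le\rho(Y)$ if $X\ge Y$), convex, and satisfies $\rho(X+m)=\rho(X)-m$ for $m\in\mathbb{R}$. Sums of sets are Minkowski sums; $x+(+\infty)=+\infty$. *)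

theory Defs
  imports "HOL-Probability.Probability"
begin

text \<open>Borel functions on \<Omega> (w.r.t. the Borel sigma-algebra of the subspace \<Omega>).
  Values outside \<Omega> are irrelevant and unconstrained.\<close>
definition Bfun :: "'a::topological_space set \<Rightarrow> ('a \<Rightarrow> real) set" where
  "Bfun \<Omega> = borel_measurable (restrict_space borel \<Omega>)"

definition BZ :: "'a::topological_space set \<Rightarrow> ('a \<Rightarrow> real) \<Rightarrow> ('a \<Rightarrow> real) set" where
  "BZ \<Omega> Z = {X \<in> Bfun \<Omega>. \<exists>c. \<forall>\<omega>\<in>\<Omega>. \<bar>X \<omega> / Z \<omega>\<bar> \<le> c}"

definition Bplus :: "'a::topological_space set \<Rightarrow> ('a \<Rightarrow> real) set" where
  "Bplus \<Omega> = {X \<in> Bfun \<Omega>. \<forall>\<omega>\<in>\<Omega>. 0 \<le> X \<omega>}"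

definition PZ :: "'a::topological_space set \<Rightarrow> ('a \<Rightarrow> real) \<Rightarrow> 'a measure set" where
  "PZ \<Omega> Z = {P. prob_space P \<and> sets P = sets (restrict_space borel \<Omega>) \<and> integrable P Z}"

text \<open>Extended-real expectation: positive part minus negative part
  (used only for functions whose negative part has finite integral).\<close>
definition eexp :: "'a measure \<Rightarrow> ('a \<Rightarrow> ereal) \<Rightarrow> ereal" where
  "eexp M f = enn2ereal (\<integral>\<^sup>+x. e2ennreal (f x) \<partial>M) - enn2ereal (\<integral>\<^sup>+x. e2ennreal (- f x) \<partial>M)"

definition conj_fn :: "(real \<Rightarrow> real) \<Rightarrow> real \<Rightarrow> ereal" where
  "conj_fn l y = (SUP x. ereal (x * y - l x))"

definition rho :: "'a measure \<Rightarrow> (real \<Rightarrow> real) \<Rightarrow> ('a \<Rightarrow> real) \<Rightarrow> ereal" where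
  "rho Q l X = (INF s. eexp Q (\<lambda>\<omega>. ereal (l (s - X \<omega>))) - ereal s)"

definition convex_risk_measure :: "'a set \<Rightarrow> ('a \<Rightarrow> real) set \<Rightarrow> (('a \<Rightarrow> real) \<Rightarrow> real) \<Rightarrow> bool" where
  "convex_risk_measure \<Omega> D \<rho> \<longleftrightarrow>
     (\<forall>X\<in>D. \<forall>Y\<in>D. (\<forall>\<omega>\<in>\<Omega>. Y \<omega> \<le> X \<omega>) \<longrightarrow> \<rho> X \<le> \<rho> Y) \<and>
     (\<forall>X\<in>D. \<forall>Y\<in>D. \<forall>t::real. 0 \<le> t \<and> t \<le> 1 \<longrightarrow>
        \<rho> (\<lambda>\<omega>. t * X \<omega> + (1 - t) * Y \<omega>) \<le> t * \<rho> X + (1 - t) * \<rho> Y) \<and>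
     (\<forall>X\<in>D. \<forall>m::real. \<rho> (\<lambda>\<omega>. X \<omega> + m) = \<rho> X - m)"

definition msum :: "('a \<Rightarrow> real) set \<Rightarrow> ('a \<Rightarrow> real) set \<Rightarrow> ('a \<Rightarrow> real) set" where
  "msum S T = {(\<lambda>\<omega>. X \<omega> + Y \<omega>) | X Y. X \<in> S \<and> Y \<in> T}"

end

theory Submission
  imports Defs
begin


lemma chord_ineq:
  fixes l :: "real \<Rightarrow> real"
  assumes cv: "convex_on UNIV l" and "x < y" "y < z"
  shows "(l y - l x) * (z - y) \<le> (l z - l y) * (y - x)"
proof -
  have 1: "(l x - l y) / (x - y) \<le> (l x - l z) / (x - z)"
    using convex_on_slope_le(1)[OF cv, of x z y] assms by auto
  have 2: "(l x - l z) / (x - z) \<le> (l y - l z) / (y - z)"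
    using convex_on_slope_le(2)[OF cv, of x z y] assms by auto
  have "(l x - l y) / (x - y) \<le> (l y - l z) / (y - z)" using 1 2 by linarith
  then have "(l y - l x) / (y - x) \<le> (l z - l y) / (z - y)"
    by (smt (verit) minus_divide_divide)
  then show ?thesis using assms by (simp add: divide_le_eq le_divide_eq field_simps)
qed

definition qr :: "(real \<Rightarrow> real) \<Rightarrow> real \<Rightarrow> real \<Rightarrow> real" where
  "qr l a h = (l (a + h) - l a) / h"
definition ql :: "(real \<Rightarrow> real) \<Rightarrow> real \<Rightarrow> real \<Rightarrow> real" where
  "ql l a h = (l a - l (a - h)) / h"

lemma qr_mono:
  assumes cv: "convex_on UNIV l" and "0 < h1" "h1 \<le> h2"
  shows "qr l a h1 \<le> qr l a h2"
proof (cases "h1 = h2")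
  case False
  then have "h1 < h2" using assms by auto
  from chord_ineq[OF cv, of a "a+h1" "a+h2"] this assms
  have "(l (a+h1) - l a) * (h2 - h1) \<le> (l (a+h2) - l (a+h1)) * h1" by auto
  then have "(l (a+h1) - l a) * h2 \<le> (l (a+h2) - l a) * h1" by (simp add: algebra_simps)
  then show ?thesis using assms unfolding qr_def
    by (simp add: divide_le_eq le_divide_eq field_simps)
qed simp

lemma ql_mono:
  assumes cv: "convex_on UNIV l" and "0 < h1" "h1 \<le> h2"
  shows "ql l a h2 \<le> ql l a h1"
proof (cases "h1 = h2")
  case False
  then have "h1 < h2" using assms by auto
  from chord_ineq[OF cv, of "a-h2" "a-h1" a] this assms
  have "(l (a-h1) - l (a-h2)) * h1 \<le> (l a - l (a-h1)) * (h2 - h1)" by auto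
  then have "(l a - l (a-h2)) * h1 \<le> (l a - l (a-h1)) * h2" by (simp add: algebra_simps)
  then show ?thesis using assms unfolding ql_def
    by (simp add: divide_le_eq le_divide_eq field_simps)
qed simp

lemma ql_le_qr:
  assumes cv: "convex_on UNIV l" and "0 < h" "0 < k"
  shows "ql l a h \<le> qr l a k"
proof -
  from chord_ineq[OF cv, of "a-h" a "a+k"] assms
  have "(l a - l (a-h)) * k \<le> (l (a+k) - l a) * h" by auto
  then show ?thesis using assms unfolding ql_def qr_def
    by (simp add: divide_le_eq le_divide_eq field_simps)
qed

lemma qr_nonneg: "mono l \<Longrightarrow> 0 < h \<Longrightarrow> 0 \<le> qr l a h"
  unfolding qr_def by (simp add: mono_def)
lemma ql_nonneg: "mono l \<Longrightarrow> 0 < h \<Longrightarrow> 0 \<le> ql l a h"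
  unfolding ql_def by (simp add: mono_def)

definition gp :: "(real \<Rightarrow> real) \<Rightarrow> real \<Rightarrow> real" where
  "gp l a = lim (\<lambda>n. qr l a (1 / Suc n))"
definition gm :: "(real \<Rightarrow> real) \<Rightarrow> real \<Rightarrow> real" where
  "gm l a = lim (\<lambda>n. ql l a (1 / Suc n))"

lemma gp_lim:
  assumes cv: "convex_on UNIV l"
  shows "(\<lambda>n. qr l a (1 / Suc n)) \<longlonglongrightarrow> gp l a"
proof -
  have "decseq (\<lambda>n. qr l a (1 / Suc n))"
    by (rule decseq_SucI) (auto intro!: qr_mono[OF cv] simp: frac_le)
  moreover have "\<forall>i. ql l a 1 \<le> qr l a (1 / Suc i)" by (auto intro!: ql_le_qr[OF cv])
  ultimately obtain L where "(\<lambda>n. qr l a (1 / Suc n)) \<longlonglongrightarrow> L" by (rule decseq_convergent)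
  then show ?thesis unfolding gp_def by (simp add: limI)
qed

lemma gm_lim:
  assumes cv: "convex_on UNIV l"
  shows "(\<lambda>n. ql l a (1 / Suc n)) \<longlonglongrightarrow> gm l a"
proof -
  have "incseq (\<lambda>n. ql l a (1 / Suc n))"
    by (rule incseq_SucI) (auto intro!: ql_mono[OF cv] simp: frac_le)
  moreover have "\<forall>i. ql l a (1 / Suc i) \<le> qr l a 1" by (auto intro!: ql_le_qr[OF cv])
  ultimately obtain L where "(\<lambda>n. ql l a (1 / Suc n)) \<longlonglongrightarrow> L" by (rule incseq_convergent)
  then show ?thesis unfolding gm_def by (simp add: limI)
qed

lemma small_inv: "0 < (h::real) \<Longrightarrow> \<exists>n. 1 / real (Suc n) \<le> h"
proof -
  assume "0 < h"
  from ex_inverse_of_nat_less[OF this] obtain n where "n > 0" "inverse (real n) < h" by auto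
  have "1 / real (Suc n) \<le> 1 / real n" using \<open>n > 0\<close> by (intro divide_left_mono) auto
  then have "1 / real (Suc n) \<le> h" using \<open>inverse (real n) < h\<close> by (simp add: inverse_eq_divide)
  then show ?thesis by blast
qed

definition subgrad :: "(real \<Rightarrow> real) \<Rightarrow> real \<Rightarrow> real \<Rightarrow> bool" where
  "subgrad l a g \<longleftrightarrow> (\<forall>b. l a + g * (b - a) \<le> l b)"

lemma subgrad_gp:
  assumes cv: "convex_on UNIV l"
  shows "subgrad l a (gp l a)"
  unfolding subgrad_def
proof
  fix b
  show "l a + gp l a * (b - a) \<le> l b"
  proof (cases b a rule: linorder_cases)
    case less
    have "ql l a (a - b) \<le> gp l a"
      using less by (intro LIMSEQ_le_const[OF gp_lim[OF cv]]) (auto intro!: ql_le_qr[OF cv])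
    then have "(l a - l b) / (a - b) \<le> gp l a" unfolding ql_def by simp
    then have "l a - l b \<le> gp l a * (a - b)" using less by (simp add: divide_le_eq)
    then show ?thesis by (simp add: algebra_simps)
  next
    case greater
    obtain n where n: "1 / real (Suc n) \<le> b - a" using small_inv[of "b-a"] greater by auto
    have "gp l a \<le> qr l a (1 / Suc n)"
      by (rule LIMSEQ_le_const2[OF gp_lim[OF cv]])
         (auto intro!: exI[of _ n] qr_mono[OF cv] simp: frac_le)
    also have "\<dots> \<le> qr l a (b - a)" using n by (intro qr_mono[OF cv]) auto
    finally have "gp l a \<le> (l b - l a) / (b - a)" unfolding qr_def by simp
    then show ?thesis using greater by (simp add: le_divide_eq algebra_simps)
  qed simp
qed

lemma subgrad_gm:
  assumes cv: "convex_on UNIV l"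
  shows "subgrad l a (gm l a)"
  unfolding subgrad_def
proof
  fix b
  show "l a + gm l a * (b - a) \<le> l b"
  proof (cases b a rule: linorder_cases)
    case less
    obtain n where n: "1 / real (Suc n) \<le> a - b" using small_inv[of "a-b"] less by auto
    have "ql l a (a - b) \<le> ql l a (1 / Suc n)" using n by (intro ql_mono[OF cv]) auto
    also have "\<dots> \<le> gm l a"
      by (rule LIMSEQ_le_const[OF gm_lim[OF cv]])
         (auto intro!: exI[of _ n] ql_mono[OF cv] simp: frac_le)
    finally have "(l a - l b) / (a - b) \<le> gm l a" unfolding ql_def by simp
    then have "l a - l b \<le> gm l a * (a - b)" using less by (simp add: divide_le_eq)
    then show ?thesis by (simp add: algebra_simps)
  next
    case greater
    have "gm l a \<le> qr l a (b - a)"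
      using greater by (intro LIMSEQ_le_const2[OF gm_lim[OF cv]]) (auto intro!: ql_le_qr[OF cv])
    then have "gm l a \<le> (l b - l a) / (b - a)" unfolding qr_def by simp
    then show ?thesis using greater by (simp add: le_divide_eq algebra_simps)
  qed simp
qed

lemma subgrad_comb:
  assumes "subgrad l a g1" "subgrad l a g2" "0 \<le> t" "t \<le> 1"
  shows "subgrad l a (t * g1 + (1 - t) * g2)"
  unfolding subgrad_def
proof
  fix b
  have "t * (l a + g1 * (b - a)) + (1 - t) * (l a + g2 * (b - a)) \<le> t * l b + (1 - t) * l b"
    using assms unfolding subgrad_def by (intro add_mono mult_left_mono) auto
  then show "l a + (t * g1 + (1 - t) * g2) * (b - a) \<le> l b" by (simp add: algebra_simps)
qed

lemma gp_nonneg: "convex_on UNIV l \<Longrightarrow> mono l \<Longrightarrow> 0 \<le> gp l a"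
  by (rule LIMSEQ_le_const[OF gp_lim]) (auto intro!: qr_nonneg)
lemma gm_nonneg: "convex_on UNIV l \<Longrightarrow> mono l \<Longrightarrow> 0 \<le> gm l a"
  by (rule LIMSEQ_le_const[OF gm_lim]) (auto intro!: ql_nonneg)

lemma convex_cont: "convex_on UNIV (l::real\<Rightarrow>real) \<Longrightarrow> continuous_on UNIV l"
  by (rule convex_on_continuous) auto

lemma gp_meas: "convex_on UNIV l \<Longrightarrow> gp l \<in> borel_measurable borel"
proof (rule borel_measurable_LIMSEQ_real[where u="\<lambda>n a. qr l a (1 / Suc n)"])
  assume cv: "convex_on UNIV l"
  show "\<And>x. x \<in> space borel \<Longrightarrow> (\<lambda>i. qr l x (1 / real (Suc i))) \<longlonglongrightarrow> gp l x"
    using gp_lim[OF cv] by auto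
  have c: "continuous_on UNIV l" using convex_cont[OF cv] .
  show "\<And>i. (\<lambda>a. qr l a (1 / real (Suc i))) \<in> borel_measurable borel"
    unfolding qr_def
    by (intro borel_measurable_continuous_onI continuous_intros continuous_on_compose2[OF c]) auto
qed

lemma gm_meas: "convex_on UNIV l \<Longrightarrow> gm l \<in> borel_measurable borel"
proof (rule borel_measurable_LIMSEQ_real[where u="\<lambda>n a. ql l a (1 / Suc n)"])
  assume cv: "convex_on UNIV l"
  show "\<And>x. x \<in> space borel \<Longrightarrow> (\<lambda>i. ql l x (1 / real (Suc i))) \<longlonglongrightarrow> gm l x"
    using gm_lim[OF cv] by auto
  have c: "continuous_on UNIV l" using convex_cont[OF cv] .
  show "\<And>i. (\<lambda>a. ql l a (1 / real (Suc i))) \<in> borel_measurable borel"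
    unfolding ql_def
    by (intro borel_measurable_continuous_onI continuous_intros continuous_on_compose2[OF c]) auto
qed



lemma coercive_min:
  fixes F :: "real \<Rightarrow> real"
  assumes c: "continuous_on UNIV F" and a: "a > 0" and g: "\<And>s. a * \<bar>s\<bar> - b \<le> F s"
  shows "\<exists>s0. \<forall>s. F s0 \<le> F s"
proof -
  define R where "R = (b + \<bar>F 0\<bar> + 1) / a"
  have "b + \<bar>F 0\<bar> + 1 \<ge> 0" using g[of 0] by auto
  then have "R \<ge> 0" using a by (simp add: R_def)
  then have "\<exists>x\<in>cball 0 R. \<forall>y\<in>cball 0 R. F x \<le> F y"
    by (intro continuous_attains_inf continuous_on_subset[OF c]) auto
  then obtain s0 where s0: "s0 \<in> cball 0 R" "\<And>y. y \<in> cball 0 R \<Longrightarrow> F s0 \<le> F y" by blast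
  have "F s0 \<le> F 0" using s0 g[of 0] a by (auto simp: R_def)
  have "F s0 \<le> F s" for s
  proof (cases "s \<in> cball 0 R")
    case False
    then have "\<bar>s\<bar> > R" by auto
    then have "a * \<bar>s\<bar> \<ge> a * R" using a by auto
    also have "a * R = b + \<bar>F 0\<bar> + 1" using a by (simp add: R_def)
    finally show ?thesis using g[of s] \<open>F s0 \<le> F 0\<close> by linarith
  qed (use s0 in auto)
  then show ?thesis by blast
qed

lemma lin_growth:
  fixes h :: "real \<Rightarrow> real"
  assumes cv: "convex_on UNIV h" and nn: "\<And>y. 0 \<le> h y" and lim: "filterlim h at_top at_top"
  shows "\<exists>M>0. \<forall>y\<ge>0. y / M - 1 \<le> h y"
proof -
  from lim have "eventually (\<lambda>y. h 0 + 1 \<le> h y) at_top" by (simp add: filterlim_at_top)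
  then obtain N where N: "\<And>y. y \<ge> N \<Longrightarrow> h 0 + 1 \<le> h y" by (auto simp: eventually_at_top_linorder)
  define M where "M = max N 1"
  have M: "M > 0" "h 0 + 1 \<le> h M" using N by (auto simp: M_def)
  have "y / M - 1 \<le> h y" if "y \<ge> 0" for y
  proof (cases "M < y")
    case True
    from chord_ineq[OF cv, of 0 M y] True M
    have "(h M - h 0) * (y - M) \<le> (h y - h M) * M" by auto
    moreover have "1 * (y - M) \<le> (h M - h 0) * (y - M)"
      using M True by (intro mult_right_mono) auto
    ultimately have "1 * (y - M) \<le> (h y - h M) * M" by linarith
    then have "(y - M) / M \<le> h y - h M" using M by (simp add: divide_le_eq)
    then have "y / M - 1 \<le> h y - h M" using M by (simp add: diff_divide_distrib)
    then show ?thesis using M nn[of 0] by linarith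
  next
    case False
    then have "y / M \<le> 1" using M by (simp add: divide_le_eq)
    then show ?thesis using nn[of y] by linarith
  qed
  then show ?thesis using M by blast
qed

lemma convex_mirror:
  assumes cv: "convex_on UNIV (h::real\<Rightarrow>real)" shows "convex_on UNIV (\<lambda>x. h (- x))"
proof (rule convex_onI)
  fix t x y :: real assume "0 < t" "t < 1"
  then show "h (- ((1 - t) *\<^sub>R x + t *\<^sub>R y)) \<le> (1 - t) * h (- x) + t * h (- y)"
    using convex_onD[OF cv, of t "-x" "-y"] by (simp add: algebra_simps)
qed auto

lemma l_coercive:
  fixes l :: "real \<Rightarrow> real"
  assumes cv: "convex_on UNIV l" and ge: "\<And>y. y \<le> l y"
    and l1: "filterlim (\<lambda>x. l x - x) at_top at_top" and l2: "filterlim (\<lambda>x. l x - x) at_top at_bot"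
  shows "\<exists>a>0. \<exists>b. \<forall>y. a * \<bar>y\<bar> - b \<le> l y - y"
proof -
  have cvh: "convex_on UNIV (\<lambda>x. l x - x)"
    by (intro convex_on_diff cv) (simp add: concave_on_ident)
  have nn: "\<And>y. 0 \<le> l y - y" using ge by (simp add: algebra_simps)
  have nn2: "\<And>y. 0 \<le> l (- y) - (- y)" using nn by blast
  have l2': "filterlim (\<lambda>y. l (- y) - (- y)) at_top at_top"
    using l2 by (simp add: filterlim_at_bot_mirror)
  obtain M1 where M1: "M1 > 0" "\<And>y. y \<ge> 0 \<Longrightarrow> y / M1 - 1 \<le> l y - y"
    using lin_growth[OF cvh nn l1] by blast
  obtain M2 where M2: "M2 > 0" "\<And>y. y \<ge> 0 \<Longrightarrow> y / M2 - 1 \<le> l (- y) - (- y)"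
    using lin_growth[OF convex_mirror[OF cvh] nn2 l2'] by blast
  define a where "a = min (1/M1) (1/M2)"
  have a: "a > 0" using M1 M2 by (auto simp: a_def)
  have "a * \<bar>y\<bar> - 1 \<le> l y - y" for y
  proof (cases "y \<ge> 0")
    case True
    have "a * y \<le> (1 / M1) * y" using True by (intro mult_right_mono) (auto simp: a_def)
    then have "a * \<bar>y\<bar> \<le> (1 / M1) * y" using True by simp
    then have "a * \<bar>y\<bar> \<le> y / M1" by simp
    then show ?thesis using M1(2)[OF True] by linarith
  next
    case False
    have "a * (- y) \<le> (1 / M2) * (- y)" using False by (intro mult_right_mono) (auto simp: a_def)
    then have "a * \<bar>y\<bar> \<le> (1 / M2) * (- y)" using False by simp
    then have "a * \<bar>y\<bar> \<le> (-y) / M2" by simp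
    then show ?thesis using M2(2)[of "-y"] False by auto
  qed
  then show ?thesis using a by blast
qed

lemma conj_facts:
  fixes l :: "real \<Rightarrow> real"
  assumes cv: "convex_on UNIV l"
    and l1: "filterlim (\<lambda>x. l x - x) at_top at_top" and l2: "filterlim (\<lambda>x. l x - x) at_top at_bot"
    and l3: "conj_fn l 1 = 0"
  shows "\<forall>y. y \<le> l y" and "\<exists>x0. l x0 = x0"
proof -
  show ge: "\<forall>y. y \<le> l y"
  proof
    fix y
    have "ereal (y * 1 - l y) \<le> conj_fn l 1" unfolding conj_fn_def by (rule SUP_upper) auto
    then show "y \<le> l y" using l3 by auto
  qed
  obtain a b where ab: "a > 0" "\<And>y. a * \<bar>y\<bar> - b \<le> l y - y"
    using l_coercive[OF cv _ l1 l2] ge by blast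
  have c: "continuous_on UNIV (\<lambda>x. l x - x)"
    using convex_cont[OF cv] by (intro continuous_intros) auto
  have "\<exists>s0. \<forall>s. l s0 - s0 \<le> l s - s" using coercive_min[OF c ab] by simp
  then obtain x0 where x0: "\<And>s. l x0 - x0 \<le> l s - s" by blast
  have "conj_fn l 1 = ereal (x0 - l x0)"
    unfolding conj_fn_def
  proof (rule antisym)
    show "(SUP x. ereal (x * 1 - l x)) \<le> ereal (x0 - l x0)"
    proof (rule SUP_least)
      fix x have "x * 1 - l x \<le> x0 - l x0" using x0[of x] by linarith
      then show "ereal (x * 1 - l x) \<le> ereal (x0 - l x0)" by (simp only: ereal_less_eq)
    qed
    show "ereal (x0 - l x0) \<le> (SUP x. ereal (x * 1 - l x))"
      by (rule SUP_upper2[of x0]) auto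
  qed
  then have "l x0 = x0" using l3 by auto
  then show "\<exists>x0. l x0 = x0" by blast
qed

lemma eexp_real:
  fixes g :: "'a \<Rightarrow> real"
  assumes g: "integrable M g"
  shows "eexp M (\<lambda>x. ereal (g x)) = ereal (integral\<^sup>L M g)"
proof -
  have i1: "integrable M (\<lambda>x. max 0 (g x))" and i2: "integrable M (\<lambda>x. max 0 (- g x))"
    using g by (auto intro!: integrable_max)
  have "(\<integral>\<^sup>+x. e2ennreal (ereal (g x)) \<partial>M) = (\<integral>\<^sup>+x. ennreal (max 0 (g x)) \<partial>M)"
    by (simp add: ennreal_max_0)
  also have "\<dots> = ennreal (\<integral>x. max 0 (g x) \<partial>M)"
    by (rule nn_integral_eq_integral[OF i1]) auto
  finally have 1: "(\<integral>\<^sup>+x. e2ennreal (ereal (g x)) \<partial>M) = ennreal (\<integral>x. max 0 (g x) \<partial>M)" .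
  have "(\<integral>\<^sup>+x. e2ennreal (- ereal (g x)) \<partial>M) = (\<integral>\<^sup>+x. ennreal (max 0 (- g x)) \<partial>M)"
    by (simp add: ennreal_max_0)
  also have "\<dots> = ennreal (\<integral>x. max 0 (- g x) \<partial>M)"
    by (rule nn_integral_eq_integral[OF i2]) auto
  finally have 2: "(\<integral>\<^sup>+x. e2ennreal (- ereal (g x)) \<partial>M) = ennreal (\<integral>x. max 0 (- g x) \<partial>M)" .
  have "(\<integral>x. g x \<partial>M) = (\<integral>x. max 0 (g x) - max 0 (- g x) \<partial>M)"
    by (rule Bochner_Integration.integral_cong) (auto simp: max_def)
  also have "\<dots> = (\<integral>x. max 0 (g x) \<partial>M) - (\<integral>x. max 0 (- g x) \<partial>M)"
    by (rule Bochner_Integration.integral_diff[OF i1 i2])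
  finally have 3: "(\<integral>x. g x \<partial>M) = (\<integral>x. max 0 (g x) \<partial>M) - (\<integral>x. max 0 (- g x) \<partial>M)" .
  show ?thesis unfolding eexp_def 1 2 3
    by (simp add: integral_nonneg_AE)
qed

lemma eexp_mono:
  assumes "\<And>x. x \<in> space M \<Longrightarrow> f x \<le> g x"
  shows "eexp M f \<le> eexp M g"
  unfolding eexp_def
proof (rule ereal_minus_mono)
  have "(\<integral>\<^sup>+x. e2ennreal (f x) \<partial>M) \<le> (\<integral>\<^sup>+x. e2ennreal (g x) \<partial>M)"
    using assms by (intro nn_integral_mono e2ennreal_mono) auto
  then show "enn2ereal (\<integral>\<^sup>+x. e2ennreal (f x) \<partial>M) \<le> enn2ereal (\<integral>\<^sup>+x. e2ennreal (g x) \<partial>M)"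
    by (simp add: less_eq_ennreal.rep_eq)
  have "(\<integral>\<^sup>+x. e2ennreal (- g x) \<partial>M) \<le> (\<integral>\<^sup>+x. e2ennreal (- f x) \<partial>M)"
    using assms by (intro nn_integral_mono e2ennreal_mono) auto
  then show "enn2ereal (\<integral>\<^sup>+x. e2ennreal (- g x) \<partial>M) \<le> enn2ereal (\<integral>\<^sup>+x. e2ennreal (- f x) \<partial>M)"
    by (simp add: less_eq_ennreal.rep_eq)
qed

lemma eexp_cong_AE:
  assumes "AE x in M. f x = g x"
  shows "eexp M f = eexp M g"
proof -
  have "(\<integral>\<^sup>+x. e2ennreal (f x) \<partial>M) = (\<integral>\<^sup>+x. e2ennreal (g x) \<partial>M)"
    using assms by (intro nn_integral_cong_AE) auto
  moreover have "(\<integral>\<^sup>+x. e2ennreal (- f x) \<partial>M) = (\<integral>\<^sup>+x. e2ennreal (- g x) \<partial>M)"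
    using assms by (intro nn_integral_cong_AE) auto
  ultimately show ?thesis unfolding eexp_def by simp
qed

lemma eexp_inf:
  fixes g w :: "'a \<Rightarrow> real"
  assumes gm: "g \<in> borel_measurable M" and w: "integrable M w"
    and le: "\<And>x. x \<in> space M \<Longrightarrow> w x \<le> g x" and ni: "\<not> integrable M g"
  shows "eexp M (\<lambda>x. ereal (g x)) = \<infinity>"
proof -
  have "(\<integral>\<^sup>+x. ennreal (- g x) \<partial>M) \<le> (\<integral>\<^sup>+x. ennreal (norm (w x)) \<partial>M)"
  proof (intro nn_integral_mono ennreal_leI)
    fix x assume "x \<in> space M"
    with le[OF this] show "- g x \<le> norm (w x)" by auto
  qed
  also have "\<dots> < \<infinity>" using w by (simp add: integrable_iff_bounded)
  finally have fin: "(\<integral>\<^sup>+x. ennreal (- g x) \<partial>M) < \<infinity>" .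
  have inf: "(\<integral>\<^sup>+x. ennreal (g x) \<partial>M) = \<infinity>"
  proof (rule ccontr)
    assume "(\<integral>\<^sup>+x. ennreal (g x) \<partial>M) \<noteq> \<infinity>"
    then have "(\<integral>\<^sup>+x. ennreal (g x) \<partial>M) + (\<integral>\<^sup>+x. ennreal (- g x) \<partial>M) < \<infinity>"
      using fin by (simp add: less_top)
    also have "(\<integral>\<^sup>+x. ennreal (g x) \<partial>M) + (\<integral>\<^sup>+x. ennreal (- g x) \<partial>M)
        = (\<integral>\<^sup>+x. ennreal (g x) + ennreal (- g x) \<partial>M)"
      using gm by (intro nn_integral_add[symmetric]) auto
    also have "\<dots> = (\<integral>\<^sup>+x. ennreal (norm (g x)) \<partial>M)"
      by (intro nn_integral_cong) (auto simp: ennreal_neg abs_if)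
    finally have "integrable M g" using gm by (simp add: integrable_iff_bounded)
    then show False using ni by simp
  qed
  show ?thesis unfolding eexp_def using inf fin
    by (simp add: less_top[symmetric])
qed



lemma int_bound:
  fixes f g :: "'a \<Rightarrow> real"
  assumes "integrable M g" "f \<in> borel_measurable M" "\<And>x. x \<in> space M \<Longrightarrow> \<bar>f x\<bar> \<le> g x"
  shows "integrable M f"
proof (rule Bochner_Integration.integrable_bound[where f=g])
  show "AE x in M. norm (f x) \<le> norm (g x)"
  proof (rule AE_I2)
    fix x assume "x \<in> space M"
    then have "\<bar>f x\<bar> \<le> g x" by (rule assms(3))
    then show "norm (f x) \<le> norm (g x)" by simp
  qed
qed (use assms in auto)

locale setting = prob_space Q
  for Q :: "'a::topological_space measure" +
  fixes \<Omega> :: "'a set" and Z :: "'a \<Rightarrow> real" and l :: "real \<Rightarrow> real" and \<phi> :: "real \<Rightarrow> real" and C :: real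
  assumes Qsets: "sets Q = sets (restrict_space borel \<Omega>)"
    and QZ: "integrable Q Z"
    and Z_ge1: "\<forall>\<omega>\<in>\<Omega>. 1 \<le> Z \<omega>" and Z_cont: "continuous_on \<Omega> Z"
    and lmono: "mono l" and lcv: "convex_on UNIV l"
    and lt1: "filterlim (\<lambda>x. l x - x) at_top at_top"
    and lt2: "filterlim (\<lambda>x. l x - x) at_top at_bot"
    and l3: "conj_fn l 1 = 0"
    and phi_lim: "filterlim (\<lambda>x. \<phi> x / x) at_top at_top"
    and phi_mono: "mono_on {1..} \<phi>"
    and lphi_int: "integrable Q (\<lambda>\<omega>. l (\<phi> (Z \<omega>)))"
    and lphi_C: "(\<integral>\<omega>. l (\<phi> (Z \<omega>)) \<partial>Q) \<le> C"
begin

lemma spaceQ: "space Q = \<Omega>"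
  using sets_eq_imp_space_eq[OF Qsets] by (simp add: space_restrict_space)

lemma meas_iff: "f \<in> borel_measurable Q \<longleftrightarrow> f \<in> Bfun \<Omega>"
  unfolding Bfun_def by (rule measurable_cong_sets[OF Qsets refl, THEN set_eq_iff[THEN iffD1], rule_format])

lemma Z_meas[measurable]: "Z \<in> borel_measurable Q"
  using meas_iff borel_measurable_continuous_on_restrict[OF Z_cont] by (simp add: Bfun_def)

lemma Z_ge1': "\<omega> \<in> space Q \<Longrightarrow> 1 \<le> Z \<omega>"
  using Z_ge1 spaceQ by auto

lemma l_cont: "continuous_on UNIV l" using convex_cont[OF lcv] .

lemma l_borel[measurable]: "l \<in> borel_measurable borel"
  using l_cont by (intro borel_measurable_continuous_onI) auto

lemma l_ge: "y \<le> l y" using conj_facts(1)[OF lcv lt1 lt2 l3] by auto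

lemma x0_ex: "\<exists>x0. l x0 = x0" using conj_facts(2)[OF lcv lt1 lt2 l3] .

lemma phi_big: "\<exists>z0\<ge>1. \<forall>x\<ge>z0. k * x \<le> \<phi> x"
proof -
  have "eventually (\<lambda>x. k \<le> \<phi> x / x) at_top" using phi_lim by (simp add: filterlim_at_top)
  then obtain N where N: "\<And>x. x \<ge> N \<Longrightarrow> k \<le> \<phi> x / x" by (auto simp: eventually_at_top_linorder)
  have "k * x \<le> \<phi> x" if "x \<ge> max N 1" for x
    using N[of x] that by (simp add: le_divide_eq)
  then show ?thesis by (intro exI[of _ "max N 1"]) auto
qed

definition inBZ :: "('a \<Rightarrow> real) \<Rightarrow> bool" where
  "inBZ X \<longleftrightarrow> X \<in> borel_measurable Q \<and> (\<exists>c\<ge>0. \<forall>\<omega>\<in>space Q. \<bar>X \<omega>\<bar> \<le> c * Z \<omega>)"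

lemma BZ_iff: "X \<in> BZ \<Omega> Z \<longleftrightarrow> inBZ X"
proof
  assume "X \<in> BZ \<Omega> Z"
  then obtain c where m: "X \<in> Bfun \<Omega>" and c: "\<And>\<omega>. \<omega> \<in> \<Omega> \<Longrightarrow> \<bar>X \<omega> / Z \<omega>\<bar> \<le> c"
    unfolding BZ_def by auto
  have "\<bar>X \<omega>\<bar> \<le> max c 0 * Z \<omega>" if "\<omega> \<in> space Q" for \<omega>
  proof -
    have Z: "Z \<omega> \<ge> 1" using Z_ge1' that by auto
    have "\<bar>X \<omega>\<bar> / Z \<omega> \<le> max c 0" using c[of \<omega>] that spaceQ Z by (auto simp: abs_divide)
    then show ?thesis using Z by (simp add: divide_le_eq)
  qed
  then show "inBZ X" using m meas_iff unfolding inBZ_def by (intro conjI exI[of _ "max c 0"]) auto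
next
  assume "inBZ X"
  then obtain c where m: "X \<in> borel_measurable Q" and c: "\<And>\<omega>. \<omega> \<in> space Q \<Longrightarrow> \<bar>X \<omega>\<bar> \<le> c * Z \<omega>"
    unfolding inBZ_def by auto
  have "\<bar>X \<omega> / Z \<omega>\<bar> \<le> c" if "\<omega> \<in> \<Omega>" for \<omega>
  proof -
    have Z: "Z \<omega> \<ge> 1" using Z_ge1 that by auto
    show ?thesis using c[of \<omega>] that spaceQ Z by (auto simp: abs_divide divide_le_eq)
  qed
  then show "X \<in> BZ \<Omega> Z" using m meas_iff unfolding BZ_def by auto
qed

lemma inBZ_int:
  assumes "inBZ X" shows "integrable Q X"
proof -
  from assms obtain c where m: "X \<in> borel_measurable Q" and c: "\<And>\<omega>. \<omega> \<in> space Q \<Longrightarrow> \<bar>X \<omega>\<bar> \<le> c * Z \<omega>"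
    unfolding inBZ_def by auto
  show ?thesis by (rule int_bound[OF _ m c]) (use QZ in auto)
qed

definition fX :: "('a \<Rightarrow> real) \<Rightarrow> real \<Rightarrow> real" where
  "fX X s = (\<integral>\<omega>. l (s - X \<omega>) \<partial>Q)"
definition FX :: "('a \<Rightarrow> real) \<Rightarrow> real \<Rightarrow> real" where
  "FX X s = fX X s - s"

lemma int_l:
  assumes X: "inBZ X" shows "integrable Q (\<lambda>\<omega>. l (s - X \<omega>))"
proof -
  from X obtain c where m[measurable]: "X \<in> borel_measurable Q" and c0: "c \<ge> 0"
    and c: "\<And>\<omega>. \<omega> \<in> space Q \<Longrightarrow> \<bar>X \<omega>\<bar> \<le> c * Z \<omega>"
    unfolding inBZ_def by auto
  obtain z0 where z0: "z0 \<ge> 1" "\<And>x. x \<ge> z0 \<Longrightarrow> (\<bar>s\<bar> + c) * x \<le> \<phi> x" using phi_big by blast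
  show ?thesis
  proof (rule int_bound)
    show "integrable Q (\<lambda>\<omega>. \<bar>l (s + c * z0)\<bar> + \<bar>l (\<phi> (Z \<omega>))\<bar> + \<bar>s\<bar> + c * Z \<omega>)"
      using lphi_int QZ by auto
    show "(\<lambda>\<omega>. l (s - X \<omega>)) \<in> borel_measurable Q" by measurable
    fix \<omega> assume w: "\<omega> \<in> space Q"
    have Z1: "Z \<omega> \<ge> 1" using Z_ge1' w by auto
    have up: "l (s - X \<omega>) \<le> \<bar>l (s + c * z0)\<bar> + \<bar>l (\<phi> (Z \<omega>))\<bar>"
    proof (cases "Z \<omega> \<ge> z0")
      case True
      have "s - X \<omega> \<le> s + c * Z \<omega>" using c[OF w] by auto
      also have "\<dots> \<le> (\<bar>s\<bar> + c) * Z \<omega>"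
      proof -
        have "\<bar>s\<bar> * 1 \<le> \<bar>s\<bar> * Z \<omega>" by (intro mult_left_mono) (use Z1 in auto)
        moreover have "(\<bar>s\<bar> + c) * Z \<omega> = \<bar>s\<bar> * Z \<omega> + c * Z \<omega>" by (simp add: distrib_right)
        ultimately show ?thesis by linarith
      qed
      also have "\<dots> \<le> \<phi> (Z \<omega>)" using z0(2)[OF True] .
      finally have "l (s - X \<omega>) \<le> l (\<phi> (Z \<omega>))" using lmono by (auto simp: mono_def)
      then show ?thesis by linarith
    next
      case False
      have "s - X \<omega> \<le> s + c * Z \<omega>" using c[OF w] by auto
      also have "\<dots> \<le> s + c * z0" using False c0 by (auto intro: mult_left_mono)
      finally have "l (s - X \<omega>) \<le> l (s + c * z0)" using lmono by (auto simp: mono_def)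
      then show ?thesis by linarith
    qed
    have lo: "- \<bar>s\<bar> - c * Z \<omega> \<le> l (s - X \<omega>)"
      using l_ge[of "s - X \<omega>"] c[OF w] by auto
    show "\<bar>l (s - X \<omega>)\<bar> \<le> \<bar>l (s + c * z0)\<bar> + \<bar>l (\<phi> (Z \<omega>))\<bar> + \<bar>s\<bar> + c * Z \<omega>"
    proof -
      have "0 \<le> c * Z \<omega>" using c0 Z1 by auto
      then show ?thesis unfolding abs_le_iff
        using up lo abs_ge_zero[of "l (s + c * z0)"] abs_ge_zero[of "l (\<phi> (Z \<omega>))"] abs_ge_zero[of s]
        by linarith
    qed
  qed
qed

lemma rho_eq: assumes "inBZ X" shows "rho Q l X = (INF s. ereal (FX X s))"
  unfolding rho_def FX_def fX_def
  by (simp add: eexp_real[OF int_l[OF assms]])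

lemma FX_convex:
  assumes X: "inBZ X" shows "convex_on UNIV (FX X)"
proof (rule convex_onI)
  fix t s1 s2 :: real assume t: "0 < t" "t < 1"
  have "fX X ((1 - t) *\<^sub>R s1 + t *\<^sub>R s2) \<le> (\<integral>\<omega>. (1 - t) * l (s1 - X \<omega>) + t * l (s2 - X \<omega>) \<partial>Q)"
    unfolding fX_def
  proof (rule integral_mono)
    show "integrable Q (\<lambda>\<omega>. l ((1 - t) *\<^sub>R s1 + t *\<^sub>R s2 - X \<omega>))" using int_l[OF X] .
    show "integrable Q (\<lambda>\<omega>. (1 - t) * l (s1 - X \<omega>) + t * l (s2 - X \<omega>))"
      using int_l[OF X] by auto
    fix \<omega>
    have "l ((1 - t) *\<^sub>R (s1 - X \<omega>) + t *\<^sub>R (s2 - X \<omega>)) \<le> (1 - t) * l (s1 - X \<omega>) + t * l (s2 - X \<omega>)"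
      using t by (intro convex_onD[OF lcv]) auto
    then show "l ((1 - t) *\<^sub>R s1 + t *\<^sub>R s2 - X \<omega>) \<le> (1 - t) * l (s1 - X \<omega>) + t * l (s2 - X \<omega>)"
      by (simp add: algebra_simps)
  qed
  also have "\<dots> = (1 - t) * fX X s1 + t * fX X s2"
    unfolding fX_def using int_l[OF X] by simp
  finally show "FX X ((1 - t) *\<^sub>R s1 + t *\<^sub>R s2) \<le> (1 - t) * FX X s1 + t * FX X s2"
    unfolding FX_def by (simp add: algebra_simps)
qed auto

lemma FX_coercive:
  assumes X: "inBZ X" shows "\<exists>a>0. \<exists>b. \<forall>s. a * \<bar>s\<bar> - b \<le> FX X s"
proof -
  obtain a b where ab: "a > 0" "\<And>y. a * \<bar>y\<bar> - b \<le> l y - y"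
    using l_coercive[OF lcv _ lt1 lt2] l_ge by blast
  have iX: "integrable Q X" using inBZ_int[OF X] .
  have "a * \<bar>s\<bar> - (b + a * (\<integral>\<omega>. \<bar>X \<omega>\<bar> \<partial>Q) + \<bar>\<integral>\<omega>. X \<omega> \<partial>Q\<bar>) \<le> FX X s" for s
  proof -
    have "(\<integral>\<omega>. s - X \<omega> + a * \<bar>s\<bar> - a * \<bar>X \<omega>\<bar> - b \<partial>Q) \<le> fX X s"
      unfolding fX_def
    proof (rule integral_mono)
      show "integrable Q (\<lambda>\<omega>. s - X \<omega> + a * \<bar>s\<bar> - a * \<bar>X \<omega>\<bar> - b)" using iX by auto
      show "integrable Q (\<lambda>\<omega>. l (s - X \<omega>))" using int_l[OF X] .
      fix \<omega>
      have "a * \<bar>s - X \<omega>\<bar> - b \<le> l (s - X \<omega>) - (s - X \<omega>)" using ab(2) .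
      moreover have "a * (\<bar>s\<bar> - \<bar>X \<omega>\<bar>) \<le> a * \<bar>s - X \<omega>\<bar>"
        by (intro mult_left_mono abs_triangle_ineq2) (use ab in auto)
      then have "a * \<bar>s\<bar> - a * \<bar>X \<omega>\<bar> \<le> a * \<bar>s - X \<omega>\<bar>" by (simp add: right_diff_distrib)
      ultimately show "s - X \<omega> + a * \<bar>s\<bar> - a * \<bar>X \<omega>\<bar> - b \<le> l (s - X \<omega>)" by linarith
    qed
    moreover have "(\<integral>\<omega>. s - X \<omega> + a * \<bar>s\<bar> - a * \<bar>X \<omega>\<bar> - b \<partial>Q)
        = s - (\<integral>\<omega>. X \<omega> \<partial>Q) + a * \<bar>s\<bar> - a * (\<integral>\<omega>. \<bar>X \<omega>\<bar> \<partial>Q) - b"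
      using iX by (simp add: prob_space)
    ultimately show ?thesis unfolding FX_def by linarith
  qed
  then show ?thesis using ab(1) by blast
qed

lemma FX_min:
  assumes X: "inBZ X" shows "\<exists>s0. (\<forall>s. FX X s0 \<le> FX X s) \<and> rho Q l X = ereal (FX X s0)"
proof -
  obtain a b where ab: "a > 0" "\<And>s. a * \<bar>s\<bar> - b \<le> FX X s" using FX_coercive[OF X] by blast
  obtain s0 where s0: "\<And>s. FX X s0 \<le> FX X s"
    using coercive_min[OF convex_cont[OF FX_convex[OF X]] ab] by blast
  have "(INF s. ereal (FX X s)) = ereal (FX X s0)"
  proof (rule antisym)
    show "(INF s. ereal (FX X s)) \<le> ereal (FX X s0)" by (rule INF_lower) auto
    show "ereal (FX X s0) \<le> (INF s. ereal (FX X s))" by (rule INF_greatest) (use s0 in auto)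
  qed
  then show ?thesis using s0 rho_eq[OF X] by auto
qed

end


lemma conj_subgrad:
  assumes "subgrad l a g" shows "conj_fn l g = ereal (a * g - l a)"
  unfolding conj_fn_def
proof (rule antisym)
  show "(SUP x. ereal (x * g - l x)) \<le> ereal (a * g - l a)"
  proof (rule SUP_least)
    fix x
    have "l a + g * (x - a) \<le> l x" using assms unfolding subgrad_def by blast
    then have "x * g - l x \<le> a * g - l a" by (simp add: algebra_simps)
    then show "ereal (x * g - l x) \<le> ereal (a * g - l a)" by (simp only: ereal_less_eq)
  qed
  show "ereal (a * g - l a) \<le> (SUP x. ereal (x * g - l x))" by (rule SUP_upper) auto
qed

context setting begin

lemma gp_borel[measurable]: "gp l \<in> borel_measurable borel" using gp_meas[OF lcv] .
lemma gm_borel[measurable]: "gm l \<in> borel_measurable borel" using gm_meas[OF lcv] .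

lemma qr_eq: "qr l (s0 - x) h = (l ((s0 + h) - x) - l (s0 - x)) / h"
  unfolding qr_def by (simp add: algebra_simps)
lemma ql_eq: "ql l (s0 - x) h = (l (s0 - x) - l ((s0 - h) - x)) / h"
  unfolding ql_def by (simp add: algebra_simps)

lemma deriv_bounds:
  assumes X: "inBZ X" and s0: "\<And>s. FX X s0 \<le> FX X s"
  shows "integrable Q (\<lambda>\<omega>. gp l (s0 - X \<omega>))" "1 \<le> (\<integral>\<omega>. gp l (s0 - X \<omega>) \<partial>Q)"
    "integrable Q (\<lambda>\<omega>. gm l (s0 - X \<omega>))" "(\<integral>\<omega>. gm l (s0 - X \<omega>) \<partial>Q) \<le> 1"
proof -
  have Xm[measurable]: "X \<in> borel_measurable Q" using X unfolding inBZ_def by auto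
  define w where "w \<omega> = qr l (s0 - X \<omega>) 1" for \<omega>
  have wi: "integrable Q w"
    unfolding w_def qr_eq using int_l[OF X] by auto
  have sqm: "(\<lambda>\<omega>. qr l (s0 - X \<omega>) (1 / Suc n)) \<in> borel_measurable Q" for n
    unfolding qr_def by measurable
  have sqm': "(\<lambda>\<omega>. ql l (s0 - X \<omega>) (1 / Suc n)) \<in> borel_measurable Q" for n
    unfolding ql_def by measurable
  have hpos: "(0::real) < 1 / Suc n" for n by auto
  have hle: "1 / real (Suc n) \<le> 1" for n by auto
  have b1: "norm (qr l (s0 - X \<omega>) (1 / Suc n)) \<le> w \<omega>" for n \<omega>
    using qr_nonneg[OF lmono hpos] qr_mono[OF lcv hpos hle] unfolding w_def by auto
  have b2: "norm (ql l (s0 - X \<omega>) (1 / Suc n)) \<le> w \<omega>" for n \<omega>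
    using ql_nonneg[OF lmono hpos] ql_le_qr[OF lcv hpos, of 1] unfolding w_def by auto
  have gpm: "(\<lambda>\<omega>. gp l (s0 - X \<omega>)) \<in> borel_measurable Q" by measurable
  have gmm: "(\<lambda>\<omega>. gm l (s0 - X \<omega>)) \<in> borel_measurable Q" by measurable
  note dc1 = integrable_dominated_convergence[OF gpm sqm wi _ AE_I2[OF b1]]
    integral_dominated_convergence[OF gpm sqm wi _ AE_I2[OF b1]]
  note dc2 = integrable_dominated_convergence[OF gmm sqm' wi _ AE_I2[OF b2]]
    integral_dominated_convergence[OF gmm sqm' wi _ AE_I2[OF b2]]
  have lim1: "AE \<omega> in Q. (\<lambda>n. qr l (s0 - X \<omega>) (1 / Suc n)) \<longlonglongrightarrow> gp l (s0 - X \<omega>)"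
    using gp_lim[OF lcv] by auto
  have lim2: "AE \<omega> in Q. (\<lambda>n. ql l (s0 - X \<omega>) (1 / Suc n)) \<longlonglongrightarrow> gm l (s0 - X \<omega>)"
    using gm_lim[OF lcv] by auto
  show "integrable Q (\<lambda>\<omega>. gp l (s0 - X \<omega>))" using dc1(1)[OF lim1] .
  show "integrable Q (\<lambda>\<omega>. gm l (s0 - X \<omega>))" using dc2(1)[OF lim2] .
  have i1: "1 \<le> (\<integral>\<omega>. qr l (s0 - X \<omega>) (1 / Suc n) \<partial>Q)" for n
  proof -
    define h where "h = 1 / real (Suc n)"
    have h: "h > 0" by (simp add: h_def)
    have "(\<integral>\<omega>. qr l (s0 - X \<omega>) h \<partial>Q) = (fX X (s0 + h) - fX X s0) / h"
      unfolding qr_eq fX_def using int_l[OF X] by simp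
    moreover have "h \<le> fX X (s0 + h) - fX X s0" using s0[of "s0 + h"] unfolding FX_def by simp
    ultimately show ?thesis using h unfolding h_def[symmetric] by (simp add: le_divide_eq)
  qed
  show "1 \<le> (\<integral>\<omega>. gp l (s0 - X \<omega>) \<partial>Q)"
    using i1 by (intro LIMSEQ_le_const[OF dc1(2)[OF lim1]]) auto
  have i2: "(\<integral>\<omega>. ql l (s0 - X \<omega>) (1 / Suc n) \<partial>Q) \<le> 1" for n
  proof -
    define h where "h = 1 / real (Suc n)"
    have h: "h > 0" by (simp add: h_def)
    have "(\<integral>\<omega>. ql l (s0 - X \<omega>) h \<partial>Q) = (fX X s0 - fX X (s0 - h)) / h"
      unfolding ql_eq fX_def using int_l[OF X] by simp
    moreover have "fX X s0 - fX X (s0 - h) \<le> h" using s0[of "s0 - h"] unfolding FX_def by simp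
    ultimately show ?thesis using h unfolding h_def[symmetric] by (simp add: divide_le_eq)
  qed
  show "(\<integral>\<omega>. gm l (s0 - X \<omega>) \<partial>Q) \<le> 1"
    using i2 by (intro LIMSEQ_le_const2[OF dc2(2)[OF lim2]]) auto
qed

end


context setting begin

lemma attain:
  assumes X: "inBZ X"
  shows "\<exists>P. prob_space P \<and> sets P = sets Q \<and> integrable P Z \<and> absolutely_continuous Q P \<and>
     rho Q l X = ereal (\<integral>\<omega>. - X \<omega> \<partial>P) - eexp Q (\<lambda>\<omega>. conj_fn l (enn2real (RN_deriv Q P \<omega>)))"
proof -
  have Xm[measurable]: "X \<in> borel_measurable Q" using X unfolding inBZ_def by auto
  obtain c where c0: "c \<ge> 0" and c: "\<And>\<omega>. \<omega> \<in> space Q \<Longrightarrow> \<bar>X \<omega>\<bar> \<le> c * Z \<omega>"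
    using X unfolding inBZ_def by auto
  have iX: "integrable Q X" using inBZ_int[OF X] .
  obtain s0 where s0: "\<And>s. FX X s0 \<le> FX X s" and rho0: "rho Q l X = ereal (FX X s0)"
    using FX_min[OF X] by blast
  note db = deriv_bounds[OF X s0]
  define Ip where "Ip = (\<integral>\<omega>. gp l (s0 - X \<omega>) \<partial>Q)"
  define Im where "Im = (\<integral>\<omega>. gm l (s0 - X \<omega>) \<partial>Q)"
  have Ip: "1 \<le> Ip" and Im: "Im \<le> 1" using db unfolding Ip_def Im_def by auto
  define lam where "lam = (if Ip = Im then 0 else (Ip - 1) / (Ip - Im))"
  have lam: "0 \<le> lam" "lam \<le> 1" "lam * Im + (1 - lam) * Ip = 1"
  proof -
    show "0 \<le> lam" "lam \<le> 1" using Ip Im by (auto simp: lam_def divide_le_eq)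
    show "lam * Im + (1 - lam) * Ip = 1"
    proof (cases "Ip = Im")
      case True then show ?thesis using Ip Im by (simp add: lam_def)
    next
      case False
      then have "Ip - Im \<noteq> 0" by simp
      then have a: "lam * (Ip - Im) = Ip - 1" using False by (simp add: lam_def)
      have "lam * Im + (1 - lam) * Ip = Ip - lam * (Ip - Im)" by (simp add: algebra_simps)
      then show ?thesis using a by linarith
    qed
  qed
  define D where "D \<omega> = lam * gm l (s0 - X \<omega>) + (1 - lam) * gp l (s0 - X \<omega>)" for \<omega>
  have Dm[measurable]: "D \<in> borel_measurable Q" unfolding D_def by measurable
  have D0: "0 \<le> D \<omega>" for \<omega>
    unfolding D_def using lam gm_nonneg[OF lcv lmono] gp_nonneg[OF lcv lmono]
    by (intro add_nonneg_nonneg mult_nonneg_nonneg) auto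
  have Di: "integrable Q D" unfolding D_def using db by auto
  have D1: "(\<integral>\<omega>. D \<omega> \<partial>Q) = 1"
    unfolding D_def using db lam by (simp add: Ip_def Im_def)
  have Dsg: "subgrad l (s0 - X \<omega>) (D \<omega>)" for \<omega>
    unfolding D_def using lam by (intro subgrad_comb subgrad_gm subgrad_gp lcv) auto
  obtain z0 where z0: "z0 \<ge> 1" "\<And>x. x \<ge> z0 \<Longrightarrow> (\<bar>s0\<bar> + c + 1) * x \<le> \<phi> x" using phi_big by blast
    have DZ: "integrable Q (\<lambda>\<omega>. D \<omega> * Z \<omega>)"
    proof (rule int_bound)
      show "integrable Q (\<lambda>\<omega>. z0 * D \<omega> + \<bar>l (\<phi> (Z \<omega>))\<bar> + \<bar>l (s0 - X \<omega>)\<bar>)"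
        using Di lphi_int int_l[OF X] by auto
      show "(\<lambda>\<omega>. D \<omega> * Z \<omega>) \<in> borel_measurable Q" by measurable
      fix \<omega> assume w: "\<omega> \<in> space Q"
      have Z1: "Z \<omega> \<ge> 1" using Z_ge1' w by auto
      have "D \<omega> * Z \<omega> \<le> z0 * D \<omega> + \<bar>l (\<phi> (Z \<omega>))\<bar> + \<bar>l (s0 - X \<omega>)\<bar>"
      proof (cases "Z \<omega> \<ge> z0")
        case True
        have "\<bar>s0\<bar> * 1 \<le> \<bar>s0\<bar> * Z \<omega>" by (intro mult_left_mono) (use Z1 in auto)
        moreover have "(\<bar>s0\<bar> + c + 1) * Z \<omega> = \<bar>s0\<bar> * Z \<omega> + c * Z \<omega> + Z \<omega>" by (simp add: distrib_right)
        moreover note z0(2)[OF True] c[OF w]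
        ultimately have gap: "Z \<omega> \<le> \<phi> (Z \<omega>) - (s0 - X \<omega>)" by auto
        have "D \<omega> * Z \<omega> \<le> D \<omega> * (\<phi> (Z \<omega>) - (s0 - X \<omega>))"
          using gap D0 by (intro mult_left_mono) auto
        also have "\<dots> \<le> l (\<phi> (Z \<omega>)) - l (s0 - X \<omega>)"
          using Dsg[of \<omega>] unfolding subgrad_def by (smt (verit) mult.commute)
        finally show ?thesis using D0[of \<omega>] z0 by (smt (verit, best) mult_nonneg_nonneg)
      next
        case False
        then have "D \<omega> * Z \<omega> \<le> D \<omega> * z0" using D0 by (intro mult_left_mono) auto
        then show ?thesis by (simp add: mult.commute)
      qed
      then show "\<bar>D \<omega> * Z \<omega>\<bar> \<le> z0 * D \<omega> + \<bar>l (\<phi> (Z \<omega>))\<bar> + \<bar>l (s0 - X \<omega>)\<bar>"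
        using D0[of \<omega>] Z1 by simp
    qed
  have XDi: "integrable Q (\<lambda>\<omega>. X \<omega> * D \<omega>)"
    proof (rule int_bound)
      show "integrable Q (\<lambda>\<omega>. c * (D \<omega> * Z \<omega>))" using DZ by auto
      show "(\<lambda>\<omega>. X \<omega> * D \<omega>) \<in> borel_measurable Q" by measurable
      fix \<omega> assume w: "\<omega> \<in> space Q"
      have "\<bar>X \<omega>\<bar> * D \<omega> \<le> (c * Z \<omega>) * D \<omega>" using c[OF w] D0 by (intro mult_right_mono) auto
      then show "\<bar>X \<omega> * D \<omega>\<bar> \<le> c * (D \<omega> * Z \<omega>)" using D0[of \<omega>] by (simp add: abs_mult mult_ac)
    qed
  define P where "P = density Q (\<lambda>\<omega>. ennreal (D \<omega>))"
  have sP: "sets P = sets Q" unfolding P_def by simp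
  have spP: "space P = space Q" unfolding P_def by simp
  have "emeasure P (space P) = 1"
  proof -
    have "emeasure P (space P) = (\<integral>\<^sup>+\<omega>. ennreal (D \<omega>) * indicator (space Q) \<omega> \<partial>Q)"
      unfolding P_def by (subst emeasure_density) auto
    also have "\<dots> = (\<integral>\<^sup>+\<omega>. ennreal (D \<omega>) \<partial>Q)"
      by (intro nn_integral_cong) auto
    also have "\<dots> = ennreal (\<integral>\<omega>. D \<omega> \<partial>Q)"
      using Di D0 by (intro nn_integral_eq_integral) auto
    finally show ?thesis using D1 by simp
  qed
  then have Pprob: "prob_space P" by (intro prob_spaceI)
  have PZ: "integrable P Z"
    unfolding P_def using DZ D0 by (subst integrable_density) auto
  have ac: "absolutely_continuous Q P" unfolding P_def by (intro absolutely_continuousI_density) auto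
  have RN: "AE \<omega> in Q. ennreal (D \<omega>) = RN_deriv Q P \<omega>"
    unfolding P_def by (rule RN_deriv_unique) auto
  have AEc: "AE \<omega> in Q. conj_fn l (enn2real (RN_deriv Q P \<omega>))
      = ereal ((s0 - X \<omega>) * D \<omega> - l (s0 - X \<omega>))"
    using RN
  proof eventually_elim
    case (elim \<omega>)
    then have "enn2real (RN_deriv Q P \<omega>) = D \<omega>" using D0[of \<omega>] by (metis enn2real_ennreal)
    then show ?case using conj_subgrad[OF Dsg[of \<omega>]] by simp
  qed
  have ci: "integrable Q (\<lambda>\<omega>. (s0 - X \<omega>) * D \<omega> - l (s0 - X \<omega>))"
  proof -
    have "(\<lambda>\<omega>. (s0 - X \<omega>) * D \<omega> - l (s0 - X \<omega>)) = (\<lambda>\<omega>. s0 * D \<omega> - X \<omega> * D \<omega> - l (s0 - X \<omega>))"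
      by (simp add: algebra_simps)
    then show ?thesis using Di XDi int_l[OF X] by auto
  qed
  have ce: "(\<integral>\<omega>. (s0 - X \<omega>) * D \<omega> - l (s0 - X \<omega>) \<partial>Q) = s0 - (\<integral>\<omega>. X \<omega> * D \<omega> \<partial>Q) - fX X s0"
  proof -
    have "(\<integral>\<omega>. (s0 - X \<omega>) * D \<omega> - l (s0 - X \<omega>) \<partial>Q) = (\<integral>\<omega>. s0 * D \<omega> - X \<omega> * D \<omega> - l (s0 - X \<omega>) \<partial>Q)"
      by (simp add: algebra_simps)
    also have "\<dots> = s0 * (\<integral>\<omega>. D \<omega> \<partial>Q) - (\<integral>\<omega>. X \<omega> * D \<omega> \<partial>Q) - fX X s0"
      unfolding fX_def using Di XDi int_l[OF X] by simp
    finally show ?thesis using D1 by simp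
  qed
  have ee: "eexp Q (\<lambda>\<omega>. conj_fn l (enn2real (RN_deriv Q P \<omega>))) = ereal (s0 - (\<integral>\<omega>. X \<omega> * D \<omega> \<partial>Q) - fX X s0)"
    using eexp_cong_AE[OF AEc] eexp_real[OF ci] ce by simp
  have ie: "(\<integral>\<omega>. - X \<omega> \<partial>P) = - (\<integral>\<omega>. X \<omega> * D \<omega> \<partial>Q)"
    unfolding P_def using D0 by (subst integral_density) (auto simp: mult_ac)
  have "rho Q l X = ereal (\<integral>\<omega>. - X \<omega> \<partial>P) - eexp Q (\<lambda>\<omega>. conj_fn l (enn2real (RN_deriv Q P \<omega>)))"
    unfolding rho0 ee ie FX_def by simp
  then show ?thesis using Pprob sP PZ ac by blast
qed

end


context setting begin

lemma meas_sets:
  assumes "sets P = sets Q" shows "f \<in> borel_measurable P \<longleftrightarrow> f \<in> borel_measurable Q"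
  by (rule measurable_cong_sets[OF assms refl, THEN set_eq_iff[THEN iffD1], rule_format])

lemma weak:
  assumes X: "inBZ X" and Pp: "prob_space P" and sP: "sets P = sets Q" and PZ: "integrable P Z"
    and ac: "absolutely_continuous Q P"
  shows "ereal (\<integral>\<omega>. - X \<omega> \<partial>P) - eexp Q (\<lambda>\<omega>. conj_fn l (enn2real (RN_deriv Q P \<omega>))) \<le> rho Q l X"
proof -
  interpret P: prob_space P by fact
  have sfP: "sigma_finite_measure P" by (rule P.sigma_finite_measure_axioms)
  have spP: "space P = space Q" using sets_eq_imp_space_eq[OF sP] .
  have Xm[measurable]: "X \<in> borel_measurable Q" using X unfolding inBZ_def by auto
  obtain c where c0: "c \<ge> 0" and c: "\<And>\<omega>. \<omega> \<in> space Q \<Longrightarrow> \<bar>X \<omega>\<bar> \<le> c * Z \<omega>"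
    using X unfolding inBZ_def by auto
  have iXP: "integrable P X"
  proof (rule int_bound)
    show "integrable P (\<lambda>\<omega>. c * Z \<omega>)" using PZ by auto
    show "X \<in> borel_measurable P" by (subst meas_sets[OF sP]) (rule Xm)
  qed (use c spP in auto)
  define d where "d \<omega> = enn2real (RN_deriv Q P \<omega>)" for \<omega>
  have dm[measurable]: "d \<in> borel_measurable Q" unfolding d_def by measurable
  have d0: "0 \<le> d \<omega>" for \<omega> unfolding d_def by simp
  have dXi: "integrable Q (\<lambda>\<omega>. d \<omega> * X \<omega>)"
    using RN_deriv_integrable[OF sfP ac sP Xm] iXP unfolding d_def by simp
  have c1: "integrable P (\<lambda>\<omega>. 1::real)" by (rule P.integrable_const)
  have di': "integrable Q (\<lambda>\<omega>. d \<omega> * 1)"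
    using RN_deriv_integrable[OF sfP ac sP borel_measurable_const[of "1::real"]] c1 unfolding d_def by simp
  then have di: "integrable Q d" by simp
  have d1: "(\<integral>\<omega>. d \<omega> \<partial>Q) = 1"
    using RN_deriv_integral[OF sfP ac sP borel_measurable_const[of "1::real"]] P.prob_space unfolding d_def by simp
  have iP: "(\<integral>\<omega>. - X \<omega> \<partial>P) = - (\<integral>\<omega>. d \<omega> * X \<omega> \<partial>Q)"
    using RN_deriv_integral[OF sfP ac sP Xm] unfolding d_def by simp
  have "ereal (\<integral>\<omega>. - X \<omega> \<partial>P) - eexp Q (\<lambda>\<omega>. conj_fn l (d \<omega>)) \<le> ereal (FX X s)" for s
  proof -
    have ci: "integrable Q (\<lambda>\<omega>. (s - X \<omega>) * d \<omega> - l (s - X \<omega>))"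
    proof -
      have "(\<lambda>\<omega>. (s - X \<omega>) * d \<omega> - l (s - X \<omega>)) = (\<lambda>\<omega>. s * d \<omega> - d \<omega> * X \<omega> - l (s - X \<omega>))"
        by (simp add: algebra_simps)
      then show ?thesis using di dXi int_l[OF X] by auto
    qed
    have ce: "(\<integral>\<omega>. (s - X \<omega>) * d \<omega> - l (s - X \<omega>) \<partial>Q) = s - (\<integral>\<omega>. d \<omega> * X \<omega> \<partial>Q) - fX X s"
    proof -
      have "(\<integral>\<omega>. (s - X \<omega>) * d \<omega> - l (s - X \<omega>) \<partial>Q) = (\<integral>\<omega>. s * d \<omega> - d \<omega> * X \<omega> - l (s - X \<omega>) \<partial>Q)"
        by (simp add: algebra_simps)
      also have "\<dots> = s * (\<integral>\<omega>. d \<omega> \<partial>Q) - (\<integral>\<omega>. d \<omega> * X \<omega> \<partial>Q) - fX X s"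
        unfolding fX_def using di dXi int_l[OF X] by simp
      finally show ?thesis using d1 by simp
    qed
    have "ereal (s - (\<integral>\<omega>. d \<omega> * X \<omega> \<partial>Q) - fX X s) = eexp Q (\<lambda>\<omega>. ereal ((s - X \<omega>) * d \<omega> - l (s - X \<omega>)))"
      using eexp_real[OF ci] ce by simp
    also have "\<dots> \<le> eexp Q (\<lambda>\<omega>. conj_fn l (d \<omega>))"
      unfolding conj_fn_def by (intro eexp_mono SUP_upper2[of "s - X _"]) auto
    finally have E: "ereal (s - (\<integral>\<omega>. d \<omega> * X \<omega> \<partial>Q) - fX X s) \<le> eexp Q (\<lambda>\<omega>. conj_fn l (d \<omega>))" .
    have "ereal (\<integral>\<omega>. - X \<omega> \<partial>P) - eexp Q (\<lambda>\<omega>. conj_fn l (d \<omega>))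
        \<le> ereal (\<integral>\<omega>. - X \<omega> \<partial>P) - ereal (s - (\<integral>\<omega>. d \<omega> * X \<omega> \<partial>Q) - fX X s)"
      using E by (intro ereal_minus_mono) auto
    also have "\<dots> = ereal (FX X s)" unfolding iP FX_def by simp
    finally show ?thesis .
  qed
  then show ?thesis unfolding rho_eq[OF X] d_def by (intro INF_greatest) auto
qed

lemma alpha_nonneg:
  assumes Pp: "prob_space P" and sP: "sets P = sets Q" and ac: "absolutely_continuous Q P"
  shows "0 \<le> eexp Q (\<lambda>\<omega>. conj_fn l (enn2real (RN_deriv Q P \<omega>)))"
proof -
  interpret P: prob_space P by fact
  have sfP: "sigma_finite_measure P" by (rule P.sigma_finite_measure_axioms)
  obtain x0 where x0: "l x0 = x0" using x0_ex by blast
  define d where "d \<omega> = enn2real (RN_deriv Q P \<omega>)" for \<omega>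
  have c1: "integrable P (\<lambda>\<omega>. 1::real)" by (rule P.integrable_const)
  have di': "integrable Q (\<lambda>\<omega>. d \<omega> * 1)"
    using RN_deriv_integrable[OF sfP ac sP borel_measurable_const[of "1::real"]] c1 unfolding d_def by simp
  then have di: "integrable Q d" by simp
  have d1: "(\<integral>\<omega>. d \<omega> \<partial>Q) = 1"
    using RN_deriv_integral[OF sfP ac sP borel_measurable_const[of "1::real"]] P.prob_space unfolding d_def by simp
  have "ereal 0 = eexp Q (\<lambda>\<omega>. ereal (x0 * d \<omega> - l x0))"
    using eexp_real[of Q "\<lambda>\<omega>. x0 * d \<omega> - l x0"] di d1 x0 by (simp add: prob_space)
  also have "\<dots> \<le> eexp Q (\<lambda>\<omega>. conj_fn l (d \<omega>))"
    unfolding conj_fn_def by (intro eexp_mono SUP_upper2[of x0]) auto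
  finally show ?thesis unfolding d_def zero_ereal_def .
qed

lemma alpha_self: "eexp Q (\<lambda>\<omega>. conj_fn l (enn2real (RN_deriv Q Q \<omega>))) = 0"
proof -
  have "AE \<omega> in Q. (\<lambda>_. 1) \<omega> = RN_deriv Q Q \<omega>"
    by (rule RN_deriv_unique) (auto simp: density_1)
  then have "AE \<omega> in Q. conj_fn l (enn2real (RN_deriv Q Q \<omega>)) = ereal ((\<lambda>_. 0) \<omega>)"
  proof eventually_elim
    case (elim \<omega>)
    then have "enn2real (RN_deriv Q Q \<omega>) = 1" by (metis enn2real_1)
    then show ?case using l3 by (simp add: zero_ereal_def)
  qed
  then have "eexp Q (\<lambda>\<omega>. conj_fn l (enn2real (RN_deriv Q Q \<omega>))) = eexp Q (\<lambda>\<omega>. ereal ((\<lambda>_. 0) \<omega>))"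
    by (rule eexp_cong_AE)
  also have "\<dots> = 0" by (subst eexp_real) auto
  finally show ?thesis .
qed

end


context setting begin

lemma phiZ_meas[measurable]: "(\<lambda>\<omega>. \<phi> (Z \<omega>)) \<in> borel_measurable Q"
proof -
  have m: "mono (\<lambda>x. \<phi> (max x 1))"
    using phi_mono unfolding mono_def mono_on_def by auto
  have [measurable]: "(\<lambda>x. \<phi> (max x 1)) \<in> borel_measurable borel" using borel_measurable_mono[OF m] .
  have mm: "(\<lambda>\<omega>. \<phi> (max (Z \<omega>) 1)) \<in> borel_measurable Q" by measurable
  have eq:  "\<phi> (max (Z \<omega>) 1) = \<phi> (Z \<omega>)" if "\<omega> \<in> space Q" for \<omega>
  proof -
    have "max (Z \<omega>) 1 = Z \<omega>" using Z_ge1'[OF that] by simp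
    then show ?thesis by simp
  qed
  show ?thesis
    using measurable_cong[of Q "\<lambda>\<omega>. \<phi> (max (Z \<omega>) 1)" "\<lambda>\<omega>. \<phi> (Z \<omega>)" borel, OF eq] mm by blast
qed

lemma A2:
  assumes Pp: "prob_space P" and sP: "sets P = sets Q" and ac: "absolutely_continuous Q P"
  shows "eexp P (\<lambda>\<omega>. ereal (\<phi> (Z \<omega>) - C)) \<le> eexp Q (\<lambda>\<omega>. conj_fn l (enn2real (RN_deriv Q P \<omega>)))"
proof -
  interpret P: prob_space P by fact
  have sfP: "sigma_finite_measure P" by (rule P.sigma_finite_measure_axioms)
  have spP: "space P = space Q" using sets_eq_imp_space_eq[OF sP] .
  define d where "d \<omega> = enn2real (RN_deriv Q P \<omega>)" for \<omega>
  have dm[measurable]: "d \<in> borel_measurable Q" unfolding d_def by measurable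
  have d0: "0 \<le> d \<omega>" for \<omega> unfolding d_def by simp
  have c1: "integrable P (\<lambda>\<omega>. 1::real)" by (rule P.integrable_const)
  have di': "integrable Q (\<lambda>\<omega>. d \<omega> * 1)"
    using RN_deriv_integrable[OF sfP ac sP borel_measurable_const[of "1::real"]] c1 unfolding d_def by simp
  then have di: "integrable Q d" by simp
  have d1: "(\<integral>\<omega>. d \<omega> \<partial>Q) = 1"
    using RN_deriv_integral[OF sfP ac sP borel_measurable_const[of "1::real"]] P.prob_space unfolding d_def by simp
  define u where "u \<omega> = \<phi> (Z \<omega>) - C" for \<omega>
  have um[measurable]: "u \<in> borel_measurable Q" unfolding u_def by measurable
  define k where "k = \<phi> 1 - C"
  have uk: "k \<le> u \<omega>" if "\<omega> \<in> space Q" for \<omega>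
    using phi_mono Z_ge1'[OF that] unfolding k_def u_def mono_on_def by auto
  define v where "v \<omega> = C * d \<omega> - l (\<phi> (Z \<omega>))" for \<omega>
  have vi: "integrable Q v" unfolding v_def using di lphi_int by auto
  have v0: "0 \<le> (\<integral>\<omega>. v \<omega> \<partial>Q)"
    unfolding v_def using di lphi_int d1 lphi_C by simp
  have pw: "ereal (d \<omega> * u \<omega> + v \<omega>) \<le> conj_fn l (d \<omega>)" for \<omega>
  proof -
    have "ereal (\<phi> (Z \<omega>) * d \<omega> - l (\<phi> (Z \<omega>))) \<le> conj_fn l (d \<omega>)"
      unfolding conj_fn_def by (rule SUP_upper) auto
    moreover have "d \<omega> * u \<omega> + v \<omega> = \<phi> (Z \<omega>) * d \<omega> - l (\<phi> (Z \<omega>))"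
      unfolding u_def v_def by (simp add: algebra_simps)
    ultimately show ?thesis by simp
  qed
  have uPm: "u \<in> borel_measurable P" by (subst meas_sets[OF sP]) (rule um)
  show ?thesis
  proof (cases "integrable Q (\<lambda>\<omega>. d \<omega> * u \<omega>)")
    case True
    have iuP: "integrable P u"
      using RN_deriv_integrable[OF sfP ac sP um] True unfolding d_def by simp
    have "eexp P (\<lambda>\<omega>. ereal (u \<omega>)) = ereal (\<integral>\<omega>. d \<omega> * u \<omega> \<partial>Q)"
      using eexp_real[OF iuP] RN_deriv_integral[OF sfP ac sP um] unfolding d_def by simp
    also have "\<dots> \<le> ereal ((\<integral>\<omega>. d \<omega> * u \<omega> \<partial>Q) + (\<integral>\<omega>. v \<omega> \<partial>Q))" using v0 by simp
    also have "\<dots> = eexp Q (\<lambda>\<omega>. ereal (d \<omega> * u \<omega> + v \<omega>))"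
      using eexp_real[of Q "\<lambda>\<omega>. d \<omega> * u \<omega> + v \<omega>"] True vi by simp
    also have "\<dots> \<le> eexp Q (\<lambda>\<omega>. conj_fn l (d \<omega>))" by (intro eexp_mono pw)
    finally show ?thesis unfolding u_def d_def .
  next
    case False
    have niP: "\<not> integrable P u"
      using RN_deriv_integrable[OF sfP ac sP um] False unfolding d_def by simp
    have "eexp P (\<lambda>\<omega>. ereal (u \<omega>)) = \<infinity>"
      by (rule eexp_inf[OF uPm P.integrable_const[of k] _ niP]) (use uk spP in auto)
    moreover have "eexp Q (\<lambda>\<omega>. ereal (d \<omega> * u \<omega> + v \<omega>)) = \<infinity>"
    proof (rule eexp_inf)
      show "(\<lambda>\<omega>. d \<omega> * u \<omega> + v \<omega>) \<in> borel_measurable Q"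
        unfolding v_def by measurable
      show "integrable Q (\<lambda>\<omega>. d \<omega> * k + v \<omega>)" using di vi by auto
      fix \<omega> assume "\<omega> \<in> space Q"
      then show "d \<omega> * k + v \<omega> \<le> d \<omega> * u \<omega> + v \<omega>" using uk d0 by (simp add: mult_left_mono)
    next
      show "\<not> integrable Q (\<lambda>\<omega>. d \<omega> * u \<omega> + v \<omega>)"
      proof
        assume "integrable Q (\<lambda>\<omega>. d \<omega> * u \<omega> + v \<omega>)"
        then have "integrable Q (\<lambda>\<omega>. (d \<omega> * u \<omega> + v \<omega>) - v \<omega>)"
          by (rule Bochner_Integration.integrable_diff[OF _ vi])
        then show False using False by simp
      qed
    qed
    then have "eexp Q (\<lambda>\<omega>. conj_fn l (d \<omega>)) = \<infinity>"
      using eexp_mono[of Q "\<lambda>\<omega>. ereal (d \<omega> * u \<omega> + v \<omega>)" "\<lambda>\<omega>. conj_fn l (d \<omega>)"] pw by auto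
    ultimately show ?thesis unfolding u_def d_def by simp
  qed
qed

lemma inBZ_comb:
  assumes "inBZ X" "inBZ Y" "0 \<le> t" "t \<le> 1"
  shows "inBZ (\<lambda>\<omega>. t * X \<omega> + (1 - t) * Y \<omega>)"
proof -
  obtain c1 where c1: "c1 \<ge> 0" "\<And>\<omega>. \<omega> \<in> space Q \<Longrightarrow> \<bar>X \<omega>\<bar> \<le> c1 * Z \<omega>" and [measurable]: "X \<in> borel_measurable Q"
    using assms(1) unfolding inBZ_def by auto
  obtain c2 where c2: "c2 \<ge> 0" "\<And>\<omega>. \<omega> \<in> space Q \<Longrightarrow> \<bar>Y \<omega>\<bar> \<le> c2 * Z \<omega>" and [measurable]: "Y \<in> borel_measurable Q"
    using assms(2) unfolding inBZ_def by auto
  have "\<bar>t * X \<omega> + (1 - t) * Y \<omega>\<bar> \<le> (c1 + c2) * Z \<omega>" if w: "\<omega> \<in> space Q" for \<omega>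
  proof -
    have Z1: "Z \<omega> \<ge> 1" using Z_ge1'[OF w] .
    have "\<bar>t * X \<omega> + (1 - t) * Y \<omega>\<bar> \<le> \<bar>t * X \<omega>\<bar> + \<bar>(1 - t) * Y \<omega>\<bar>"
      by (rule abs_triangle_ineq)
    also have "\<dots> = t * \<bar>X \<omega>\<bar> + (1 - t) * \<bar>Y \<omega>\<bar>"
      using assms(3,4) by (simp add: abs_mult)
    also have "\<dots> \<le> 1 * \<bar>X \<omega>\<bar> + 1 * \<bar>Y \<omega>\<bar>"
      using assms(3,4) by (intro add_mono mult_right_mono) auto
    also have "\<dots> \<le> c1 * Z \<omega> + c2 * Z \<omega>" using c1(2)[OF w] c2(2)[OF w] by simp
    finally show ?thesis by (simp add: distrib_right)
  qed
  then show ?thesis unfolding inBZ_def using c1 c2 by (intro conjI exI[of _ "c1 + c2"]) auto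
qed

lemma inBZ_add:
  assumes "inBZ X" shows "inBZ (\<lambda>\<omega>. X \<omega> + m)"
proof -
  obtain c where c: "c \<ge> 0" "\<And>\<omega>. \<omega> \<in> space Q \<Longrightarrow> \<bar>X \<omega>\<bar> \<le> c * Z \<omega>" and [measurable]: "X \<in> borel_measurable Q"
    using assms unfolding inBZ_def by auto
  have "\<bar>X \<omega> + m\<bar> \<le> (c + \<bar>m\<bar>) * Z \<omega>" if w: "\<omega> \<in> space Q" for \<omega>
  proof -
    have Z1: "Z \<omega> \<ge> 1" using Z_ge1'[OF w] .
    have "\<bar>m\<bar> * 1 \<le> \<bar>m\<bar> * Z \<omega>" by (intro mult_left_mono) (use Z1 in auto)
    then show ?thesis using c(2)[OF w] by (simp add: distrib_right)
  qed
  then show ?thesis unfolding inBZ_def using c by (intro conjI exI[of _ "c + \<bar>m\<bar>"]) auto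
qed

end


context setting begin

lemma FX_mono:
  assumes X: "inBZ X" and Y: "inBZ Y" and le: "\<And>\<omega>. \<omega> \<in> space Q \<Longrightarrow> Y \<omega> \<le> X \<omega>"
  shows "FX X s \<le> FX Y s"
proof -
  have "fX X s \<le> fX Y s" unfolding fX_def
  proof (rule integral_mono)
    show "integrable Q (\<lambda>\<omega>. l (s - X \<omega>))" "integrable Q (\<lambda>\<omega>. l (s - Y \<omega>))" using int_l X Y by auto
    fix \<omega> assume "\<omega> \<in> space Q"
    then have "s - X \<omega> \<le> s - Y \<omega>" using le by auto
    then show "l (s - X \<omega>) \<le> l (s - Y \<omega>)" using lmono by (auto simp: mono_def)
  qed
  then show ?thesis unfolding FX_def by simp
qed

lemma rm_mono:
  assumes X: "inBZ X" and Y: "inBZ Y" and le: "\<And>\<omega>. \<omega> \<in> space Q \<Longrightarrow> Y \<omega> \<le> X \<omega>"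
  shows "real_of_ereal (rho Q l X) \<le> real_of_ereal (rho Q l Y)"
proof -
  obtain sX where sX: "\<And>s. FX X sX \<le> FX X s" "rho Q l X = ereal (FX X sX)" using FX_min[OF X] by blast
  obtain sY where sY: "\<And>s. FX Y sY \<le> FX Y s" "rho Q l Y = ereal (FX Y sY)" using FX_min[OF Y] by blast
  have "FX X sX \<le> FX X sY" by (rule sX(1))
  also have "\<dots> \<le> FX Y sY" by (rule FX_mono[OF X Y le])
  finally show ?thesis using sX sY by simp
qed

lemma rm_conv:
  assumes X: "inBZ X" and Y: "inBZ Y" and t: "0 \<le> t" "t \<le> 1"
  shows "real_of_ereal (rho Q l (\<lambda>\<omega>. t * X \<omega> + (1 - t) * Y \<omega>))
     \<le> t * real_of_ereal (rho Q l X) + (1 - t) * real_of_ereal (rho Q l Y)"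
proof -
  define W where "W = (\<lambda>\<omega>. t * X \<omega> + (1 - t) * Y \<omega>)"
  have W: "inBZ W" unfolding W_def using inBZ_comb[OF X Y t] .
  obtain sX where sX: "\<And>s. FX X sX \<le> FX X s" "rho Q l X = ereal (FX X sX)" using FX_min[OF X] by blast
  obtain sY where sY: "\<And>s. FX Y sY \<le> FX Y s" "rho Q l Y = ereal (FX Y sY)" using FX_min[OF Y] by blast
  obtain sW where sW: "\<And>s. FX W sW \<le> FX W s" "rho Q l W = ereal (FX W sW)" using FX_min[OF W] by blast
  define s' where "s' = t * sX + (1 - t) * sY"
  have "fX W s' \<le> (\<integral>\<omega>. t * l (sX - X \<omega>) + (1 - t) * l (sY - Y \<omega>) \<partial>Q)"
    unfolding fX_def
  proof (rule integral_mono)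
    show "integrable Q (\<lambda>\<omega>. l (s' - W \<omega>))" using int_l[OF W] .
    show "integrable Q (\<lambda>\<omega>. t * l (sX - X \<omega>) + (1 - t) * l (sY - Y \<omega>))" using int_l X Y by auto
    fix \<omega>
    have "l ((1 - (1 - t)) *\<^sub>R (sX - X \<omega>) + (1 - t) *\<^sub>R (sY - Y \<omega>))
        \<le> (1 - (1 - t)) * l (sX - X \<omega>) + (1 - t) * l (sY - Y \<omega>)"
      using t by (intro convex_onD[OF lcv]) auto
    moreover have "s' - W \<omega> = (1 - (1 - t)) *\<^sub>R (sX - X \<omega>) + (1 - t) *\<^sub>R (sY - Y \<omega>)"
      unfolding s'_def W_def by (simp add: algebra_simps)
    ultimately show "l (s' - W \<omega>) \<le> t * l (sX - X \<omega>) + (1 - t) * l (sY - Y \<omega>)" by simp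
  qed
  also have "\<dots> = t * fX X sX + (1 - t) * fX Y sY"
    unfolding fX_def using int_l X Y by simp
  finally have "FX W s' \<le> t * FX X sX + (1 - t) * FX Y sY"
    unfolding FX_def s'_def by (simp add: algebra_simps)
  then have "FX W sW \<le> t * FX X sX + (1 - t) * FX Y sY" using sW(1)[of s'] by linarith
  then show ?thesis using sX sY sW unfolding W_def by simp
qed

lemma FX_shift: "FX (\<lambda>\<omega>. X \<omega> + m) s = FX X (s - m) - m"
  unfolding FX_def fX_def by (simp add: algebra_simps)

lemma rm_cash:
  assumes X: "inBZ X"
  shows "real_of_ereal (rho Q l (\<lambda>\<omega>. X \<omega> + m)) = real_of_ereal (rho Q l X) - m"
proof -
  have Xm: "inBZ (\<lambda>\<omega>. X \<omega> + m)" using inBZ_add[OF X] .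
  obtain sX where sX: "\<And>s. FX X sX \<le> FX X s" "rho Q l X = ereal (FX X sX)" using FX_min[OF X] by blast
  obtain s1 where s1: "\<And>s. FX (\<lambda>\<omega>. X \<omega> + m) s1 \<le> FX (\<lambda>\<omega>. X \<omega> + m) s"
    "rho Q l (\<lambda>\<omega>. X \<omega> + m) = ereal (FX (\<lambda>\<omega>. X \<omega> + m) s1)" using FX_min[OF Xm] by blast
  have "FX (\<lambda>\<omega>. X \<omega> + m) s1 = FX X sX - m"
  proof (rule antisym)
    show "FX (\<lambda>\<omega>. X \<omega> + m) s1 \<le> FX X sX - m"
      using s1(1)[of "sX + m"] by (simp add: FX_shift)
    show "FX X sX - m \<le> FX (\<lambda>\<omega>. X \<omega> + m) s1"
      using sX(1)[of "s1 - m"] by (simp add: FX_shift)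
  qed
  then show ?thesis using sX s1 by simp
qed

lemma rho_zero: "rho Q l (\<lambda>\<omega>. 0) = 0"
proof -
  have Z0: "inBZ (\<lambda>\<omega>. 0)" unfolding inBZ_def by auto
  obtain s0 where s0: "\<And>s. FX (\<lambda>\<omega>. 0) s0 \<le> FX (\<lambda>\<omega>. 0) s" "rho Q l (\<lambda>\<omega>. 0) = ereal (FX (\<lambda>\<omega>. 0) s0)"
    using FX_min[OF Z0] by blast
  have F: "FX (\<lambda>\<omega>. 0) s = l s - s" for s unfolding FX_def fX_def by (simp add: prob_space)
  obtain x0 where x0: "l x0 = x0" using x0_ex by blast
  have "FX (\<lambda>\<omega>. 0) s0 = 0"
    using s0(1)[of x0] x0 l_ge[of s0] unfolding F by simp
  then show ?thesis using s0(2) by (simp add: zero_ereal_def)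
qed

lemma rho_fin: "inBZ X \<Longrightarrow> \<bar>rho Q l X\<bar> \<noteq> \<infinity>"
  using FX_min by force

end


lemma ereal_L1: "ereal a - e \<le> 0 \<Longrightarrow> ereal a \<le> e" by (cases e) auto
lemma ereal_L2: "0 \<le> ereal a + e \<Longrightarrow> ereal (- a) - e \<le> 0" by (cases e) auto
lemma ereal_L3: "ereal (- a) \<le> e \<Longrightarrow> 0 \<le> ereal a + e" by (cases e) auto

theorem lemma4p1:
  fixes \<Omega> :: "((real^'d)^'t) set" and d0 :: 'd and Z :: "(real^'d)^'t \<Rightarrow> real"
    and \<Q> :: "((real^'d)^'t) measure set"
    and l :: "((real^'d)^'t) measure \<Rightarrow> real \<Rightarrow> real"
  assumes Omega_ne: "\<Omega> \<noteq> {}"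
    and Omega_sub: "\<Omega> \<subseteq> {x. \<forall>t. 0 < x $ t $ d0}"
    and Z_cont: "continuous_on \<Omega> Z"
    and Z_ge1: "\<forall>\<omega>\<in>\<Omega>. 1 \<le> Z \<omega>"
    and Z_compact: "\<forall>z::real. 0 \<le> z \<longrightarrow> compact {\<omega>\<in>\<Omega>. Z \<omega> \<le> z}"
    and Q_sub: "\<Q> \<subseteq> PZ \<Omega> Z"
    and Q_ne: "\<Q> \<noteq> {}"
    and l1: "\<forall>Q\<in>\<Q>. mono (l Q) \<and> convex_on UNIV (l Q)
               \<and> filterlim (\<lambda>x. l Q x - x) at_top at_top
               \<and> filterlim (\<lambda>x. l Q x - x) at_top at_bot"
    and l2: "\<exists>\<phi>::real \<Rightarrow> real. mono_on {1..} \<phi> \<and> filterlim (\<lambda>x. \<phi> x / x) at_top at_top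
               \<and> (\<exists>C::real. \<forall>Q\<in>\<Q>. integrable Q (\<lambda>\<omega>. l Q (\<phi> (Z \<omega>)))
                                   \<and> (\<integral>\<omega>. l Q (\<phi> (Z \<omega>)) \<partial>Q) \<le> C)"
    and l3: "\<forall>Q\<in>\<Q>. conj_fn (l Q) 1 = 0"
  shows "(\<forall>Q\<in>\<Q>.
            (\<forall>X\<in>BZ \<Omega> Z. \<bar>rho Q (l Q) X\<bar> \<noteq> \<infinity>)
          \<and> convex_risk_measure \<Omega> (BZ \<Omega> Z) (\<lambda>X. real_of_ereal (rho Q (l Q) X))
          \<and> rho Q (l Q) (\<lambda>\<omega>. 0) = 0
          \<and> (\<forall>X\<in>BZ \<Omega> Z. \<exists>P\<in>PZ \<Omega> Z. absolutely_continuous Q P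
               \<and> rho Q (l Q) X = ereal (\<integral>\<omega>. - X \<omega> \<partial>P)
                    - eexp Q (\<lambda>\<omega>. conj_fn (l Q) (enn2real (RN_deriv Q P \<omega>)))
               \<and> (\<forall>P'\<in>PZ \<Omega> Z. absolutely_continuous Q P' \<longrightarrow>
                    ereal (\<integral>\<omega>. - X \<omega> \<partial>P')
                      - eexp Q (\<lambda>\<omega>. conj_fn (l Q) (enn2real (RN_deriv Q P' \<omega>)))
                    \<le> rho Q (l Q) X)))
        \<and> (\<exists>(\<alpha>::((real^'d)^'t) measure \<Rightarrow> ereal) (\<beta>::real \<Rightarrow> real).
              (\<forall>P\<in>PZ \<Omega> Z. 0 \<le> \<alpha> P)
            \<and> (INF P\<in>PZ \<Omega> Z. \<alpha> P) = 0
            \<and> mono_on {1..} \<beta> \<and> filterlim (\<lambda>x. \<beta> x / x) at_top at_top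
            \<and> (\<forall>P\<in>PZ \<Omega> Z. eexp P (\<lambda>\<omega>. ereal (\<beta> (Z \<omega>))) \<le> \<alpha> P)
            \<and> msum (\<Inter>Q\<in>\<Q>. {X\<in>BZ \<Omega> Z. rho Q (l Q) X \<le> 0}) (Bplus \<Omega>)
              = msum {X\<in>BZ \<Omega> Z. \<forall>P\<in>PZ \<Omega> Z. 0 \<le> ereal (\<integral>\<omega>. X \<omega> \<partial>P) + \<alpha> P} (Bplus \<Omega>))"
proof -
  obtain \<phi> C where phi_mono: "mono_on {1..} \<phi>" and phi_lim: "filterlim (\<lambda>x. \<phi> x / x) at_top at_top"
    and phiQ: "\<And>Q. Q \<in> \<Q> \<Longrightarrow> integrable Q (\<lambda>\<omega>. l Q (\<phi> (Z \<omega>))) \<and> (\<integral>\<omega>. l Q (\<phi> (Z \<omega>)) \<partial>Q) \<le> C"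
    using l2 by blast
  have inst: "setting Q \<Omega> Z (l Q) \<phi> C" if Q: "Q \<in> \<Q>" for Q
  proof -
    have "Q \<in> PZ \<Omega> Z" using Q Q_sub by auto
    then have "prob_space Q" "sets Q = sets (restrict_space borel \<Omega>)" "integrable Q Z"
      unfolding PZ_def by auto
    then show ?thesis unfolding setting_def setting_axioms_def
      using Q l1 l3 phiQ[OF Q] phi_mono phi_lim Z_ge1 Z_cont by auto
  qed
  have PZ_iff: "P \<in> PZ \<Omega> Z \<longleftrightarrow> prob_space P \<and> sets P = sets (restrict_space borel \<Omega>) \<and> integrable P Z" for P
    unfolding PZ_def by auto
  have QsetsR: "sets Q = sets (restrict_space borel \<Omega>)" if "Q \<in> \<Q>" for Q
    using that Q_sub unfolding PZ_def by auto
  have part1: "(\<forall>X\<in>BZ \<Omega> Z. \<bar>rho Q (l Q) X\<bar> \<noteq> \<infinity>)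
          \<and> convex_risk_measure \<Omega> (BZ \<Omega> Z) (\<lambda>X. real_of_ereal (rho Q (l Q) X))
          \<and> rho Q (l Q) (\<lambda>\<omega>. 0) = 0
          \<and> (\<forall>X\<in>BZ \<Omega> Z. \<exists>P\<in>PZ \<Omega> Z. absolutely_continuous Q P
               \<and> rho Q (l Q) X = ereal (\<integral>\<omega>. - X \<omega> \<partial>P)
                    - eexp Q (\<lambda>\<omega>. conj_fn (l Q) (enn2real (RN_deriv Q P \<omega>)))
               \<and> (\<forall>P'\<in>PZ \<Omega> Z. absolutely_continuous Q P' \<longrightarrow>
                    ereal (\<integral>\<omega>. - X \<omega> \<partial>P')
                      - eexp Q (\<lambda>\<omega>. conj_fn (l Q) (enn2real (RN_deriv Q P' \<omega>)))
                    \<le> rho Q (l Q) X))" if Q: "Q \<in> \<Q>" for Q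
  proof -
    interpret S: setting Q \<Omega> Z "l Q" \<phi> C by (rule inst[OF Q])
    have crm: "convex_risk_measure \<Omega> (BZ \<Omega> Z) (\<lambda>X. real_of_ereal (rho Q (l Q) X))"
      unfolding convex_risk_measure_def
    proof (intro conjI ballI allI impI)
      fix X Y assume "X \<in> BZ \<Omega> Z" "Y \<in> BZ \<Omega> Z" "\<forall>\<omega>\<in>\<Omega>. Y \<omega> \<le> X \<omega>"
      then show "real_of_ereal (rho Q (l Q) X) \<le> real_of_ereal (rho Q (l Q) Y)"
        using S.rm_mono[of X Y] S.BZ_iff S.spaceQ by auto
    next
      fix X Y and t :: real assume "X \<in> BZ \<Omega> Z" "Y \<in> BZ \<Omega> Z" "0 \<le> t \<and> t \<le> 1"
      then show "real_of_ereal (rho Q (l Q) (\<lambda>\<omega>. t * X \<omega> + (1 - t) * Y \<omega>))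
         \<le> t * real_of_ereal (rho Q (l Q) X) + (1 - t) * real_of_ereal (rho Q (l Q) Y)"
        using S.rm_conv[of X Y t] S.BZ_iff by auto
    next
      fix X and m :: real assume "X \<in> BZ \<Omega> Z"
      then show "real_of_ereal (rho Q (l Q) (\<lambda>\<omega>. X \<omega> + m)) = real_of_ereal (rho Q (l Q) X) - m"
        using S.rm_cash[of X m] S.BZ_iff by auto
    qed
    have att: "\<exists>P\<in>PZ \<Omega> Z. absolutely_continuous Q P
               \<and> rho Q (l Q) X = ereal (\<integral>\<omega>. - X \<omega> \<partial>P)
                    - eexp Q (\<lambda>\<omega>. conj_fn (l Q) (enn2real (RN_deriv Q P \<omega>)))
               \<and> (\<forall>P'\<in>PZ \<Omega> Z. absolutely_continuous Q P' \<longrightarrow>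
                    ereal (\<integral>\<omega>. - X \<omega> \<partial>P')
                      - eexp Q (\<lambda>\<omega>. conj_fn (l Q) (enn2real (RN_deriv Q P' \<omega>)))
                    \<le> rho Q (l Q) X)" if X: "X \<in> BZ \<Omega> Z" for X
    proof -
      have X': "S.inBZ X" using X S.BZ_iff by auto
      obtain P where P: "prob_space P" "sets P = sets Q" "integrable P Z" "absolutely_continuous Q P"
        "rho Q (l Q) X = ereal (\<integral>\<omega>. - X \<omega> \<partial>P) - eexp Q (\<lambda>\<omega>. conj_fn (l Q) (enn2real (RN_deriv Q P \<omega>)))"
        using S.attain[OF X'] by blast
      have "P \<in> PZ \<Omega> Z" using P QsetsR[OF Q] by (auto simp: PZ_iff)
      moreover have "\<forall>P'\<in>PZ \<Omega> Z. absolutely_continuous Q P' \<longrightarrow>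
                    ereal (\<integral>\<omega>. - X \<omega> \<partial>P')
                      - eexp Q (\<lambda>\<omega>. conj_fn (l Q) (enn2real (RN_deriv Q P' \<omega>)))
                    \<le> rho Q (l Q) X"
        using S.weak[OF X'] QsetsR[OF Q] by (auto simp: PZ_iff)
      ultimately show ?thesis using P by blast
    qed
    show ?thesis using S.rho_fin S.BZ_iff crm S.rho_zero att by auto
  qed
  define \<alpha> where "\<alpha> P = (INF Q\<in>{Q\<in>\<Q>. absolutely_continuous Q P}. eexp Q (\<lambda>\<omega>. conj_fn (l Q) (enn2real (RN_deriv Q P \<omega>))))"
    for P :: "((real^'d)^'t) measure"
  define \<beta> where "\<beta> x = \<phi> x - C" for x
  have a_nn: "0 \<le> \<alpha> P" if P: "P \<in> PZ \<Omega> Z" for P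
    unfolding \<alpha>_def
  proof (rule INF_greatest)
    fix Q assume Q: "Q \<in> {Q\<in>\<Q>. absolutely_continuous Q P}"
    interpret S: setting Q \<Omega> Z "l Q" \<phi> C using inst Q by auto
    show "0 \<le> eexp Q (\<lambda>\<omega>. conj_fn (l Q) (enn2real (RN_deriv Q P \<omega>)))"
      using S.alpha_nonneg P Q QsetsR by (auto simp: PZ_iff)
  qed
  have a_inf: "(INF P\<in>PZ \<Omega> Z. \<alpha> P) = 0"
  proof (rule antisym)
    obtain Q0 where Q0: "Q0 \<in> \<Q>" using Q_ne by blast
    interpret S: setting Q0 \<Omega> Z "l Q0" \<phi> C using inst Q0 by auto
    have "Q0 \<in> PZ \<Omega> Z" using Q0 Q_sub by auto
    moreover have "\<alpha> Q0 \<le> 0"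
    proof -
      have "absolutely_continuous Q0 Q0" unfolding absolutely_continuous_def by simp
      then have "\<alpha> Q0 \<le> eexp Q0 (\<lambda>\<omega>. conj_fn (l Q0) (enn2real (RN_deriv Q0 Q0 \<omega>)))"
        unfolding \<alpha>_def using Q0 by (intro INF_lower) auto
      then show ?thesis using S.alpha_self by simp
    qed
    ultimately show "(INF P\<in>PZ \<Omega> Z. \<alpha> P) \<le> 0" by (meson INF_lower2)
    show "0 \<le> (INF P\<in>PZ \<Omega> Z. \<alpha> P)" using a_nn by (intro INF_greatest) auto
  qed
  have b_mono: "mono_on {1..} \<beta>" using phi_mono unfolding \<beta>_def mono_on_def by auto
  have b_lim: "filterlim (\<lambda>x. \<beta> x / x) at_top at_top"
  proof -
    have t: "((\<lambda>x::real. (- C) * inverse x) \<longlongrightarrow> (- C) * 0) at_top"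
      by (intro tendsto_mult tendsto_const tendsto_inverse_0_at_top filterlim_ident)
    have "filterlim (\<lambda>x. (- C) * inverse x + \<phi> x / x) at_top at_top"
      by (rule filterlim_tendsto_add_at_top[OF t phi_lim])
    moreover have "(\<lambda>x. (- C) * inverse x + \<phi> x / x) = (\<lambda>x. \<beta> x / x)"
      unfolding \<beta>_def by (auto simp: divide_inverse algebra_simps)
    ultimately show ?thesis by simp
  qed
  have b_A2: "eexp P (\<lambda>\<omega>. ereal (\<beta> (Z \<omega>))) \<le> \<alpha> P" if P: "P \<in> PZ \<Omega> Z" for P
    unfolding \<alpha>_def
  proof (rule INF_greatest)
    fix Q assume Q: "Q \<in> {Q\<in>\<Q>. absolutely_continuous Q P}"
    interpret S: setting Q \<Omega> Z "l Q" \<phi> C using inst Q by auto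
    show "eexp P (\<lambda>\<omega>. ereal (\<beta> (Z \<omega>))) \<le> eexp Q (\<lambda>\<omega>. conj_fn (l Q) (enn2real (RN_deriv Q P \<omega>)))"
      using S.A2 P Q QsetsR unfolding \<beta>_def by (auto simp: PZ_iff)
  qed
  have seteq: "(\<Inter>Q\<in>\<Q>. {X\<in>BZ \<Omega> Z. rho Q (l Q) X \<le> 0})
      = {X\<in>BZ \<Omega> Z. \<forall>P\<in>PZ \<Omega> Z. 0 \<le> ereal (\<integral>\<omega>. X \<omega> \<partial>P) + \<alpha> P}"
  proof (intro set_eqI iffI)
    fix X assume X: "X \<in> (\<Inter>Q\<in>\<Q>. {X\<in>BZ \<Omega> Z. rho Q (l Q) X \<le> 0})"
    then have XB: "X \<in> BZ \<Omega> Z" using Q_ne by auto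
    have "0 \<le> ereal (\<integral>\<omega>. X \<omega> \<partial>P) + \<alpha> P" if P: "P \<in> PZ \<Omega> Z" for P
    proof (rule ereal_L3)
      show "ereal (- (\<integral>\<omega>. X \<omega> \<partial>P)) \<le> \<alpha> P"
        unfolding \<alpha>_def
      proof (rule INF_greatest)
        fix Q assume Q: "Q \<in> {Q\<in>\<Q>. absolutely_continuous Q P}"
        interpret S: setting Q \<Omega> Z "l Q" \<phi> C using inst Q by auto
        have "ereal (\<integral>\<omega>. - X \<omega> \<partial>P) - eexp Q (\<lambda>\<omega>. conj_fn (l Q) (enn2real (RN_deriv Q P \<omega>))) \<le> rho Q (l Q) X"
          using S.weak XB S.BZ_iff P Q QsetsR by (auto simp: PZ_iff)
        also have "\<dots> \<le> 0" using X Q by auto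
        finally show "ereal (- (\<integral>\<omega>. X \<omega> \<partial>P)) \<le> eexp Q (\<lambda>\<omega>. conj_fn (l Q) (enn2real (RN_deriv Q P \<omega>)))"
          by (intro ereal_L1) simp
      qed
    qed
    then show "X \<in> {X\<in>BZ \<Omega> Z. \<forall>P\<in>PZ \<Omega> Z. 0 \<le> ereal (\<integral>\<omega>. X \<omega> \<partial>P) + \<alpha> P}" using XB by auto
  next
    fix X assume X: "X \<in> {X\<in>BZ \<Omega> Z. \<forall>P\<in>PZ \<Omega> Z. 0 \<le> ereal (\<integral>\<omega>. X \<omega> \<partial>P) + \<alpha> P}"
    then have XB: "X \<in> BZ \<Omega> Z" and XP: "\<And>P. P \<in> PZ \<Omega> Z \<Longrightarrow> 0 \<le> ereal (\<integral>\<omega>. X \<omega> \<partial>P) + \<alpha> P" by auto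
    have "rho Q (l Q) X \<le> 0" if Q: "Q \<in> \<Q>" for Q
    proof -
      obtain P where P: "P \<in> PZ \<Omega> Z" "absolutely_continuous Q P"
        and eq: "rho Q (l Q) X = ereal (\<integral>\<omega>. - X \<omega> \<partial>P) - eexp Q (\<lambda>\<omega>. conj_fn (l Q) (enn2real (RN_deriv Q P \<omega>)))"
        using part1[OF Q] XB by blast
      have "\<alpha> P \<le> eexp Q (\<lambda>\<omega>. conj_fn (l Q) (enn2real (RN_deriv Q P \<omega>)))"
        unfolding \<alpha>_def using Q P by (intro INF_lower) auto
      then have "0 \<le> ereal (\<integral>\<omega>. X \<omega> \<partial>P) + eexp Q (\<lambda>\<omega>. conj_fn (l Q) (enn2real (RN_deriv Q P \<omega>)))"
        using XP[OF P(1)] by (meson add_left_mono order_trans)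
      then have "ereal (- (\<integral>\<omega>. X \<omega> \<partial>P)) - eexp Q (\<lambda>\<omega>. conj_fn (l Q) (enn2real (RN_deriv Q P \<omega>))) \<le> 0"
        by (rule ereal_L2)
      then show ?thesis unfolding eq by simp
    qed
    then show "X \<in> (\<Inter>Q\<in>\<Q>. {X\<in>BZ \<Omega> Z. rho Q (l Q) X \<le> 0})" using XB by auto
  qed
  show ?thesis
    using part1 a_nn a_inf b_mono b_lim b_A2 seteq
    by (intro conjI ballI exI[of _ \<alpha>] exI[of _ \<beta>]) auto
qed


end
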